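(* Let $p\ge1$ and $K\in\mathcal K^{n,1}_{(o)}$. Then for every $Q\in\mathcal K_o^{1,m}$ and every star body $L\subset M_{n,m}$, \[ \widetilde V_{-p,nm}(L,\Pi^\circ_{Q,p}K)=\frac{(nm+p)\,\mathrm{vol}_{nm}(L)}{m}\,V_{p,n}(K,\Gamma_{Q,p}L). \]
   Context: $M_{k,l}$: real $k\times l$ matrices with inner product $\langle A,B\rangle=\mathrm{tr}(A^t.B)$, identified with $\mathbb R^{kl}$ (Lebesgue measure $\mathrm{vol}_{kl}$, sphere $\mathbb S^{kl-1}$); $A.B$ matrix product; $\mathbb R^n\cong M_{n,1}$, $\mathbb R^m\cong M_{1,m}$. $\mathcal K_o^{k,l}$ / $\mathcal K_{(o)}^{k,l}$: convex bodies in $M_{k,l}$ containing the origin / containing it in the interior. $h_G(x)=\sup_{y\in G}\langle y,x\rangle$, $G^\circ=\{x:h_G(x)\le1\}$. For $K\in\mathcal K^{n,1}_{(o)}$, $\sigma_K$ is its surface area measure, $d\sigma_{K,p}=h_K^{1-p}d\sigma_K$, $\Pi_{Q,p}K$ has $h_{\Pi_{Q,p}K}(x)^p=\int_{\mathbb S^{n-1}}h_Q(v^t.x)^pd\sigma_{K,p}(v)$, $\Pi^\circ_{Q,p}K=(\Pi_{Q,p}K)^\circ$. For compact $L\subset M_{n,m}$ of positive volume, $h_{\Gamma_{Q,p}L}(v)^p=\frac1{\mathrm{vol}_{nm}(L)}\int_Lh_Q(v^t.x)^pdx$, $v\in M_{n,1}$. A star body is a compact set containing the origin in its interior, star-shaped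 w.r.t. the origin, with continuous positive radial function $\rho_L(y)=\sup\{\lambda>0:\lambda y\in L\}$. $L^p$ mixed volume: $V_{p,n}(K,M)=\frac1n\int_{\mathbb S^{n-1}}h_M^p\,d\sigma_{K,p}$. Dual mixed volume in $\mathbb R^d$: $\widetilde V_{-p,d}(K,L)=\frac1d\int_{\mathbb S^{d-1}}\rho_K(\theta)^{d+p}\rho_L(\theta)^{-p}d\theta$. *)

theory Defs
  imports "HOL-Analysis.Analysis"
begin

definition convex_body :: "'a::euclidean_space set \<Rightarrow> bool" where
  "convex_body K \<longleftrightarrow> K \<noteq> {} \<and> compact K \<and> convex K"

definition convex_body_o :: "'a::euclidean_space set \<Rightarrow> bool" where
  "convex_body_o K \<longleftrightarrow> convex_body K \<and> 0 \<in> K"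

definition convex_body_io :: "'a::euclidean_space set \<Rightarrow> bool" where
  "convex_body_io K \<longleftrightarrow> convex_body K \<and> 0 \<in> interior K"

definition supp_fun :: "'a::real_inner set \<Rightarrow> 'a \<Rightarrow> real" where
  "supp_fun G x = (SUP y\<in>G. inner y x)"

definition polar :: "'a::real_inner set \<Rightarrow> 'a set" where
  "polar G = {x. supp_fun G x \<le> 1}"

text \<open>Radial function, extended-real valued (it is "+\<infinity>" in directions in which the
  set is unbounded, e.g. for polars of lower-dimensional bodies).\<close>
definition radial_fun :: "'a::real_normed_vector set \<Rightarrow> 'a \<Rightarrow> ereal" where
  "radial_fun L y = (SUP t\<in>{t. t > 0 \<and> t *\<^sub>R y \<in> L}. ereal t)"

definition star_body :: "'a::euclidean_space set \<Rightarrow> bool" where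
  "star_body L \<longleftrightarrow> compact L \<and> 0 \<in> interior L \<and>
     (\<forall>x\<in>L. \<forall>t\<in>{0..1}. t *\<^sub>R x \<in> L) \<and>
     (\<forall>y\<in>sphere 0 1. 0 < radial_fun L y \<and> radial_fun L y < \<infinity>) \<and>
     continuous_on (sphere 0 1) (\<lambda>y. real_of_ereal (radial_fun L y))"

text \<open>Spherical Lebesgue measure on "S^{d-1}" (as a measure on the ambient space,
  concentrated on the unit sphere): push-forward of "d" times Lebesgue measure on
  the unit ball under radial projection (cone-volume description of the surface measure).\<close>
definition sphere_measure :: "'a::euclidean_space measure" where
  "sphere_measure = distr (density lborel (\<lambda>x. ennreal (real DIM('a)) * indicator (ball 0 1) x))
                          borel (\<lambda>x. x /\<^sub>R norm x)"

text \<open>"s"-dimensional Hausdorff (outer) measure, normalised so that it agrees with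
  "s"-dimensional Lebesgue measure on "s"-dimensional flats.\<close>
definition hausdorff_outer :: "nat \<Rightarrow> 'a::euclidean_space set \<Rightarrow> ennreal" where
  "hausdorff_outer s A =
     (SUP \<delta>\<in>{0<..}. INF C\<in>{C :: nat \<Rightarrow> 'a set. A \<subseteq> (\<Union>i. C i) \<and>
                        (\<forall>i. bounded (C i) \<and> diameter (C i) \<le> \<delta>)}.
        (\<Sum>i. if C i = {} then 0
               else ennreal (unit_ball_vol (real s) * (diameter (C i) / 2) ^ s)))"

definition rev_spherical_image :: "'a::euclidean_space set \<Rightarrow> 'a set \<Rightarrow> 'a set" where
  "rev_spherical_image K \<omega> =
     {x \<in> frontier K. \<exists>v\<in>\<omega>. norm v = 1 \<and> (\<forall>y\<in>K. inner v (y - x) \<le> 0)}"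

text \<open>Surface area measure "\<sigma>_K(\<omega>) = H^{n-1}(\<nu>_K^{-1}(\<omega>))" on Borel subsets of
  the unit sphere (as a measure on the ambient space, concentrated on the sphere).\<close>
definition surface_area_measure :: "'a::euclidean_space set \<Rightarrow> 'a measure" where
  "surface_area_measure K =
     measure_of UNIV (sets borel)
       (\<lambda>\<omega>. hausdorff_outer (DIM('a) - 1) (rev_spherical_image K (\<omega> \<inter> sphere 0 1)))"

definition lp_surface_area_measure :: "real \<Rightarrow> 'a::euclidean_space set \<Rightarrow> 'a measure" where
  "lp_surface_area_measure p K =
     density (surface_area_measure K) (\<lambda>v. ennreal (supp_fun K v powr (1 - p)))"

definition lp_mixed_volume :: "real \<Rightarrow> 'a::euclidean_space set \<Rightarrow> 'a set \<Rightarrow> real" where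
  "lp_mixed_volume p K M =
     (1 / real DIM('a)) * (\<integral>v. supp_fun M v powr p \<partial>(lp_surface_area_measure p K))"

text \<open>Dual mixed volume; "\<rho>_L^{-p}" is read as "(1/\<rho>_L)^p", i.e. 0 where "\<rho>_L = \<infinity>".\<close>
definition dual_mixed_volume :: "real \<Rightarrow> 'a::euclidean_space set \<Rightarrow> 'a set \<Rightarrow> real" where
  "dual_mixed_volume p K L =
     (1 / real DIM('a)) *
       (\<integral>\<theta>. real_of_ereal (radial_fun K \<theta>) powr (real DIM('a) + p) *
            real_of_ereal (inverse (radial_fun L \<theta>)) powr p \<partial>sphere_measure)"

text \<open>"M_{n,m}" is "real^'m^'n" ("n" rows, "m" columns); "R^n \<cong> M_{n,1}" is "real^'n"
  and "R^m \<cong> M_{1,m}" is "real^'m"; "v^t.x" is "v v* x".\<close>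
definition Pi_body :: "(real^'m) set \<Rightarrow> real \<Rightarrow> (real^'n) set \<Rightarrow> (real^'m^'n) set" where
  "Pi_body Q p K =
     {y. \<forall>x. inner y x \<le>
        (\<integral>v. supp_fun Q (v v* x) powr p \<partial>(lp_surface_area_measure p K)) powr (1 / p)}"

definition Gamma_body :: "(real^'m) set \<Rightarrow> real \<Rightarrow> (real^'m^'n) set \<Rightarrow> (real^'n) set" where
  "Gamma_body Q p L =
     {y. \<forall>v. inner y v \<le>
        ((1 / measure lborel L) * (LINT x:L|lborel. supp_fun Q (v v* x) powr p)) powr (1 / p)}"

end

theory Submission
  imports Defs "HOL-Analysis.Analysis"
begin


lemma normalize_measurable[measurable]:
  "(\<lambda>x::'a::euclidean_space. x /\<^sub>R norm x) \<in> borel_measurable borel"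
  by measurable

lemma norm_preimage_borel:
  "B \<in> sets borel \<Longrightarrow> (norm :: 'a::euclidean_space \<Rightarrow> real) -` B \<in> sets borel"
  using measurable_sets_borel[of norm borel B] by simp

lemma sphere_measure_sets[simp, measurable_cong]:
  "sets (sphere_measure :: 'a::euclidean_space measure) = sets borel"
  by (simp add: sphere_measure_def)

lemma sphere_measure_space[simp]:
  "space (sphere_measure :: 'a::euclidean_space measure) = UNIV"
  by (simp add: sphere_measure_def)

lemma emeasure_sphere_measure:
  fixes A :: "'a::euclidean_space set"
  assumes A: "A \<in> sets borel"
  shows "emeasure sphere_measure A =
    ennreal (real DIM('a)) * emeasure lborel {x. x /\<^sub>R norm x \<in> A \<and> norm x < 1}"
proof -
  have m: "{x::'a. x /\<^sub>R norm x \<in> A \<and> norm x < 1} \<in> sets borel"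
    using A by measurable
  have [measurable]: "ball (0::'a) 1 \<in> sets borel" by simp
  have pre: "(\<lambda>x::'a. x /\<^sub>R norm x) -` A \<in> sets borel"
    using A by (intro measurable_sets_borel[OF normalize_measurable]) 
  have "emeasure sphere_measure A = emeasure (density lborel (\<lambda>x::'a. ennreal (real DIM('a)) * indicator (ball 0 1) x))
      ((\<lambda>x. x /\<^sub>R norm x) -` A)"
    unfolding sphere_measure_def using A pre by (subst emeasure_distr) auto
  also have "\<dots> = (\<integral>\<^sup>+x. (ennreal (real DIM('a)) * indicator (ball 0 1) x) * indicator ((\<lambda>x. x /\<^sub>R norm x) -` A) x \<partial>lborel)"
    using pre by (subst emeasure_density) auto
  also have "\<dots> = (\<integral>\<^sup>+x. ennreal (real DIM('a)) * indicator {x::'a. x /\<^sub>R norm x \<in> A \<and> norm x < 1} x \<partial>lborel)"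
    by (intro nn_integral_cong) (auto split: split_indicator simp: mult.assoc)
  also have "\<dots> = ennreal (real DIM('a)) * emeasure lborel {x. x /\<^sub>R norm x \<in> A \<and> norm x < 1}"
    using m by (subst nn_integral_cmult_indicator) auto
  finally show ?thesis .
qed

lemma cone_scale:
  fixes A :: "'a::euclidean_space set"
  assumes A: "A \<in> sets borel" and s: "s > 0"
  shows "emeasure lborel {x::'a. x /\<^sub>R norm x \<in> A \<and> norm x < s} =
         ennreal (s ^ DIM('a)) * emeasure lborel {x. x /\<^sub>R norm x \<in> A \<and> norm x < 1}"
proof -
  have m: "\<And>s. {x::'a. x /\<^sub>R norm x \<in> A \<and> norm x < s} \<in> sets borel"
    using A by measurable
  have "emeasure lborel {x::'a. x /\<^sub>R norm x \<in> A \<and> norm x < s} =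
    emeasure (density (distr lborel borel (\<lambda>x::'a. 0 + s *\<^sub>R x)) (\<lambda>_. \<bar>s\<bar>^DIM('a)))
       {x::'a. x /\<^sub>R norm x \<in> A \<and> norm x < s}"
    using s by (subst (1) lborel_affine[of s 0]) auto
  also have "\<dots> = (\<integral>\<^sup>+x. ennreal (\<bar>s\<bar>^DIM('a)) * indicator {x::'a. x /\<^sub>R norm x \<in> A \<and> norm x < s} x
      \<partial>distr lborel borel (\<lambda>x::'a. 0 + s *\<^sub>R x))"
    using m by (subst emeasure_density) auto
  also have "\<dots> = (\<integral>\<^sup>+x. ennreal (\<bar>s\<bar>^DIM('a)) * indicator {x::'a. x /\<^sub>R norm x \<in> A \<and> norm x < s} (0 + s *\<^sub>R x)
      \<partial>lborel)"
    using m by (subst nn_integral_distr) auto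
  also have "\<dots> = (\<integral>\<^sup>+x. ennreal (\<bar>s\<bar>^DIM('a)) * indicator {x::'a. x /\<^sub>R norm x \<in> A \<and> norm x < 1} x
      \<partial>lborel)"
  proof (intro nn_integral_cong)
    fix x :: 'a
    have "(s *\<^sub>R x) /\<^sub>R norm (s *\<^sub>R x) = x /\<^sub>R norm x" using s
      by (cases "x = 0") (auto simp: field_simps)
    moreover have "norm (s *\<^sub>R x) < s \<longleftrightarrow> norm x < 1" using s by auto
    ultimately have "(0 + s *\<^sub>R x) \<in> {x::'a. x /\<^sub>R norm x \<in> A \<and> norm x < s} \<longleftrightarrow> x \<in> {x::'a. x /\<^sub>R norm x \<in> A \<and> norm x < 1}"
      by (simp only: mem_Collect_eq add_0_left)
    then show "ennreal (\<bar>s\<bar>^DIM('a)) * indicator {x::'a. x /\<^sub>R norm x \<in> A \<and> norm x < s} (0 + s *\<^sub>R x) =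
      ennreal (\<bar>s\<bar>^DIM('a)) * indicator {x::'a. x /\<^sub>R norm x \<in> A \<and> norm x < 1} x"
      unfolding indicator_def by simp
  qed
  also have "\<dots> = ennreal (s ^ DIM('a)) * emeasure lborel {x. x /\<^sub>R norm x \<in> A \<and> norm x < 1}"
    using m s by (subst nn_integral_cmult_indicator) auto
  finally show ?thesis .
qed

lemma finite_sphere_measure: "finite_measure (sphere_measure :: 'a::euclidean_space measure)"
proof (rule finite_measureI)
  have "emeasure (sphere_measure::'a measure) (space sphere_measure) =
      ennreal (real DIM('a)) * emeasure lborel {x::'a. x /\<^sub>R norm x \<in> UNIV \<and> norm x < 1}"
    by (simp add: emeasure_sphere_measure)
  also have "{x::'a. x /\<^sub>R norm x \<in> UNIV \<and> norm x < 1} = ball 0 1" by auto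
  finally show "emeasure (sphere_measure::'a measure) (space sphere_measure) \<noteq> \<infinity>"
    using emeasure_bounded_finite[of "ball (0::'a) 1"] by (simp add: ennreal_mult_eq_top_iff)
qed


lemma nn_integral_powr_lessThan:
  fixes a c :: real
  assumes a: "a > -1" and c: "c \<ge> 0"
  shows "(\<integral>\<^sup>+r. ennreal (indicator {0<..} r * r powr a) * indicator {..<c} r \<partial>lborel) =
         ennreal (c powr (a+1) / (a+1))"
proof -
  have "(\<integral>\<^sup>+r. ennreal (indicator {0<..} r * r powr a) * indicator {..<c} r \<partial>lborel) =
        (\<integral>\<^sup>+r. ennreal (indicator {0..c} r * r powr a) \<partial>lborel)"
  proof (rule nn_integral_cong_AE)
    show "AE r in lborel. ennreal (indicator {0<..} r * r powr a) * indicator {..<c} r =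
          ennreal (indicator {0..c} r * r powr a)"
      using AE_lborel_singleton[of 0] AE_lborel_singleton[of c]
      by eventually_elim (auto split: split_indicator)
  qed
  also have "\<dots> = ennreal (c powr (a+1) / (a+1))"
    by (rule nn_integral_has_integral_lebesgue) (use has_integral_powr_from_0[OF a c] in auto)
  finally show ?thesis .
qed

lemma cone_radial_measure:
  fixes A :: "'a::euclidean_space set"
  assumes A: "A \<in> sets borel"
  shows "distr (density lborel (indicator {x::'a. x /\<^sub>R norm x \<in> A})) borel norm =
         density lborel (\<lambda>r. emeasure sphere_measure A * ennreal (indicator {0<..} r * r ^ (DIM('a) - 1)))"
    (is "?N = ?R")
proof (rule measure_eqI_generator_eq_countable[where E="range lessThan" and \<Omega>=UNIV and A="range (\<lambda>n::nat. {..<real n})"])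
  let ?C = "{x::'a. x /\<^sub>R norm x \<in> A}"
  have Cm[measurable]: "?C \<in> sets borel" using A by measurable
  have Em: "\<And>s. {x::'a. x /\<^sub>R norm x \<in> A \<and> norm x < s} \<in> sets borel"
    using A by measurable
  have N: "emeasure ?N {..<s} = emeasure lborel {x::'a. x /\<^sub>R norm x \<in> A \<and> norm x < s}" for s
  proof -
    have "emeasure ?N {..<s} = emeasure (density lborel (indicator ?C)) (norm -` {..<s})"
      by (subst emeasure_distr) auto
    also have "\<dots> = (\<integral>\<^sup>+x. indicator ?C x * indicator (norm -` {..<s}) x \<partial>lborel)"
      by (rule emeasure_density, simp, subst sets_lborel, rule norm_preimage_borel, simp)
    also have "\<dots> = (\<integral>\<^sup>+x. indicator {x::'a. x /\<^sub>R norm x \<in> A \<and> norm x < s} x \<partial>lborel)"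
      by (intro nn_integral_cong) (auto split: split_indicator)
    also have "\<dots> = emeasure lborel {x::'a. x /\<^sub>R norm x \<in> A \<and> norm x < s}"
      using Em by simp
    finally show ?thesis .
  qed
  have R: "emeasure ?R {..<s} = emeasure sphere_measure A *
      (\<integral>\<^sup>+r. ennreal (indicator {0<..} r * r ^ (DIM('a) - 1)) * indicator {..<s} r \<partial>lborel)" for s
    by (subst emeasure_density) (auto simp: nn_integral_cmult[symmetric] mult.assoc intro!: nn_integral_cong)
  show "emeasure ?N X = emeasure ?R X" if "X \<in> range lessThan" for X
  proof -
    obtain s where X: "X = {..<s}" using \<open>X \<in> range lessThan\<close> by auto
    show ?thesis
    proof (cases "s > 0")
      case False
      then have e: "{x::'a. x /\<^sub>R norm x \<in> A \<and> norm x < s} = {}"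
        using norm_ge_zero by (metis (mono_tags, lifting) Collect_empty_eq leD linorder_not_less order_less_le_trans)
      have z: "(\<integral>\<^sup>+r. ennreal (indicator {0<..} r * r ^ (DIM('a) - 1)) * indicator {..<s} r \<partial>lborel) = 0"
        using False by (subst nn_integral_0_iff_AE[THEN iffD2]) (auto split: split_indicator)
      show ?thesis unfolding X N R e z by simp
    next
      case True
      have pw: "(\<integral>\<^sup>+r. ennreal (indicator {0<..} r * r ^ (DIM('a) - 1)) * indicator {..<s} r \<partial>lborel) =
          ennreal (s ^ DIM('a) / real DIM('a))"
      proof -
        obtain k where k: "DIM('a) - 1 = k" by simp
        have kD: "real k + 1 = real DIM('a)" using k DIM_positive[where 'a='a] by linarith
        have "(\<integral>\<^sup>+r. ennreal (indicator {0<..} r * r ^ k) * indicator {..<s} r \<partial>lborel) =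
            (\<integral>\<^sup>+r. ennreal (indicator {0<..} r * r powr (real k)) * indicator {..<s} r \<partial>lborel)"
          by (intro nn_integral_cong) (auto split: split_indicator simp: powr_realpow)
        also have "\<dots> = ennreal (s powr (real k + 1) / (real k + 1))"
          using True by (intro nn_integral_powr_lessThan) auto
        also have "s powr (real k + 1) = s ^ DIM('a)" using True kD by (simp add: powr_realpow)
        finally show ?thesis unfolding k kD .
      qed
      have "emeasure ?R X = ennreal (real DIM('a)) * emeasure lborel {x::'a. x /\<^sub>R norm x \<in> A \<and> norm x < 1} *
          ennreal (s ^ DIM('a) / real DIM('a))"
        unfolding X R pw by (simp add: emeasure_sphere_measure[OF A])
      also have "\<dots> = ennreal (s ^ DIM('a)) * emeasure lborel {x::'a. x /\<^sub>R norm x \<in> A \<and> norm x < 1}"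
      proof -
        have h: "ennreal (real DIM('a)) * ennreal (s ^ DIM('a) / real DIM('a)) = ennreal (s ^ DIM('a))"
          using True by (subst ennreal_mult''[symmetric]) auto
        have "ennreal (real DIM('a)) * emeasure lborel {x::'a. x /\<^sub>R norm x \<in> A \<and> norm x < 1} *
          ennreal (s ^ DIM('a) / real DIM('a)) = emeasure lborel {x::'a. x /\<^sub>R norm x \<in> A \<and> norm x < 1} *
          (ennreal (real DIM('a)) * ennreal (s ^ DIM('a) / real DIM('a)))"
          by (simp only: ac_simps)
        then show ?thesis unfolding h by (simp only: ac_simps)
      qed
      also have "\<dots> = emeasure ?N X"
        unfolding X N using cone_scale[OF A True] by simp
      finally show ?thesis by simp
    qed
  qed
  show "Int_stable (range lessThan :: real set set)"
    unfolding Int_stable_def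
  proof safe
    fix a b :: real
    have "{..<a} \<inter> {..<b} = {..<min a b}" by auto
    then show "{..<a} \<inter> {..<b} \<in> range lessThan" by blast
  qed
  show "range lessThan \<subseteq> Pow (UNIV :: real set)" by auto
  show "sets ?N = sigma_sets UNIV (range lessThan)"
    by (simp add: borel_Iio)
  show "sets ?R = sigma_sets UNIV (range lessThan)"
    by (simp add: borel_Iio)
  show "range (\<lambda>n::nat. {..<real n}) \<subseteq> range lessThan" by auto
  show "\<Union> (range (\<lambda>n::nat. {..<real n})) = UNIV"
    by (auto intro: reals_Archimedean2)
  show "countable (range (\<lambda>n::nat. {..<real n}))" by simp
  show "emeasure ?N a \<noteq> \<infinity>" if a0: "a \<in> range (\<lambda>n::nat. {..<real n})" for a
  proof -
    obtain n where a: "a = {..<real n}" using a0 by auto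
    have "emeasure ?N a = emeasure lborel {x::'a. x /\<^sub>R norm x \<in> A \<and> norm x < real n}"
      unfolding a N ..
    also have "\<dots> \<le> emeasure lborel (ball (0::'a) (real n))"
      by (intro emeasure_mono) auto
    also have "\<dots> < \<infinity>" by (rule emeasure_bounded_finite) auto
    finally show ?thesis by simp
  qed
qed


lemma polar_nn:
  fixes f :: "'a::euclidean_space \<Rightarrow> ennreal"
  assumes f[measurable]: "f \<in> borel_measurable borel"
  shows "(\<integral>\<^sup>+x. f x \<partial>lborel) =
    (\<integral>\<^sup>+\<theta>. (\<integral>\<^sup>+r. ennreal (indicator {0<..} r * r ^ (DIM('a) - 1)) * f (r *\<^sub>R \<theta>) \<partial>lborel) \<partial>sphere_measure)"
proof -
  let ?g = "\<lambda>r::real. ennreal (indicator {0<..} r * r ^ (DIM('a) - 1))"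
  define R where "R = density lborel ?g"
  define S where "S = (\<lambda>x::'a. (x /\<^sub>R norm x, norm x))"
  have Sm[measurable]: "S \<in> borel \<rightarrow>\<^sub>M borel \<Otimes>\<^sub>M borel" unfolding S_def by measurable
  define M where "M = distr lborel (borel \<Otimes>\<^sub>M borel) S"
  have sfS: "sigma_finite_measure (sphere_measure :: 'a measure)"
    by (rule finite_measure.axioms(1)[OF finite_sphere_measure])
  have sfR: "sigma_finite_measure R"
    unfolding R_def by (subst sigma_finite_measure.sigma_finite_iff_density_finite'[OF sigma_finite_lborel]) auto
  have setsR[simp]: "sets R = sets borel" unfolding R_def by simp
  have eq: "sphere_measure \<Otimes>\<^sub>M R = M"
  proof (rule pair_measure_eqI[OF sfS sfR])
    show "sets (sphere_measure \<Otimes>\<^sub>M R) = sets M"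
      unfolding M_def by (simp cong: sets_pair_measure_cong)
    fix A B assume A: "A \<in> sets (sphere_measure :: 'a measure)" and B: "B \<in> sets R"
    then have Ab[measurable]: "A \<in> sets borel" and Bb[measurable]: "B \<in> sets borel" by auto
    have "emeasure M (A \<times> B) = emeasure lborel (S -` (A \<times> B))"
      unfolding M_def by (subst emeasure_distr) auto
    also have "S -` (A \<times> B) = norm -` B \<inter> {x::'a. x /\<^sub>R norm x \<in> A}"
      unfolding S_def by auto
    also have "emeasure lborel (norm -` B \<inter> {x::'a. x /\<^sub>R norm x \<in> A}) =
        emeasure (distr (density lborel (indicator {x::'a. x /\<^sub>R norm x \<in> A})) borel norm) B"
    proof -
      have m: "norm -` B \<inter> {x::'a. x /\<^sub>R norm x \<in> A} \<in> sets borel" by measurable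
      have Cm[measurable]: "{x::'a. x /\<^sub>R norm x \<in> A} \<in> sets borel" by measurable
      have "emeasure (distr (density lborel (indicator {x::'a. x /\<^sub>R norm x \<in> A})) borel norm) B =
          emeasure (density lborel (indicator {x::'a. x /\<^sub>R norm x \<in> A})) (norm -` B)"
        by (subst emeasure_distr) auto
      also have "\<dots> = (\<integral>\<^sup>+x. indicator {x::'a. x /\<^sub>R norm x \<in> A} x * indicator (norm -` B) x \<partial>lborel)"
        by (rule emeasure_density, simp, subst sets_lborel, rule norm_preimage_borel, rule Bb)
      also have "\<dots> = (\<integral>\<^sup>+x. indicator (norm -` B \<inter> {x::'a. x /\<^sub>R norm x \<in> A}) x \<partial>lborel)"
        by (intro nn_integral_cong) (auto split: split_indicator)
      also have "\<dots> = emeasure lborel (norm -` B \<inter> {x::'a. x /\<^sub>R norm x \<in> A})"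
        using m by simp
      finally show ?thesis ..
    qed
    also have "\<dots> = emeasure (density lborel (\<lambda>r. emeasure sphere_measure A * ?g r)) B"
      by (subst cone_radial_measure[OF Ab]) simp
    also have "\<dots> = emeasure sphere_measure A * emeasure R B"
      unfolding R_def
      by (simp add: emeasure_density nn_integral_cmult[symmetric] mult.assoc)
    finally show "emeasure sphere_measure A * emeasure R B = emeasure M (A \<times> B)" ..
  qed
  define T where "T = (\<lambda>(\<theta>, r::real). r *\<^sub>R (\<theta>::'a))"
  have Tm[measurable]: "T \<in> borel \<Otimes>\<^sub>M borel \<rightarrow>\<^sub>M borel" unfolding T_def by measurable
  have TS: "T (S x) = x" for x unfolding T_def S_def by (cases "x = 0") auto
  have "(\<integral>\<^sup>+x. f x \<partial>lborel) = (\<integral>\<^sup>+x. f (T (S x)) \<partial>lborel)" by (simp add: TS)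
  also have "\<dots> = (\<integral>\<^sup>+y. f (T y) \<partial>M)"
    unfolding M_def by (subst nn_integral_distr) auto
  also have "\<dots> = (\<integral>\<^sup>+y. f (T y) \<partial>(sphere_measure \<Otimes>\<^sub>M R))" by (simp add: eq)
  also have "\<dots> = (\<integral>\<^sup>+\<theta>. (\<integral>\<^sup>+r. f (T (\<theta>, r)) \<partial>R) \<partial>sphere_measure)"
  proof -
    have sP: "sets (sphere_measure \<Otimes>\<^sub>M R) = sets (borel \<Otimes>\<^sub>M borel)"
      using eq unfolding M_def by simp
    have fm: "(\<lambda>y. f (T y)) \<in> borel_measurable (sphere_measure \<Otimes>\<^sub>M R)"
      unfolding measurable_cong_sets[OF sP refl] by measurable
    show ?thesis by (rule sigma_finite_measure.nn_integral_fst[OF sfR fm, symmetric])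
  qed
  also have "\<dots> = (\<integral>\<^sup>+\<theta>. (\<integral>\<^sup>+r. ?g r * f (r *\<^sub>R \<theta>) \<partial>lborel) \<partial>sphere_measure)"
  proof (intro nn_integral_cong)
    fix \<theta> :: 'a
    have fm: "(\<lambda>r. f (r *\<^sub>R \<theta>)) \<in> borel_measurable lborel" by simp
    have gm: "?g \<in> borel_measurable lborel" by simp
    show "(\<integral>\<^sup>+r. f (T (\<theta>, r)) \<partial>R) = (\<integral>\<^sup>+r. ?g r * f (r *\<^sub>R \<theta>) \<partial>lborel)"
      unfolding R_def T_def prod.case by (rule nn_integral_density[OF gm fm])
  qed
  finally show ?thesis .
qed


lemma AE_sphere_measure: "AE \<theta> in (sphere_measure :: 'a::euclidean_space measure). \<theta> \<in> sphere 0 1"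
proof -
  have [measurable]: "ball (0::'a) 1 \<in> sets borel" by simp
  have "AE x in lborel. (x::'a) \<noteq> 0" by (rule AE_lborel_singleton)
  then have "AE x in density lborel (\<lambda>x::'a. ennreal (real DIM('a)) * indicator (ball 0 1) x). x \<noteq> 0"
    by (subst AE_density) (auto elim!: AE_mp)
  then have "AE x in density lborel (\<lambda>x::'a. ennreal (real DIM('a)) * indicator (ball 0 1) x). x /\<^sub>R norm x \<in> sphere 0 1"
    by (rule AE_mp) auto
  then show ?thesis unfolding sphere_measure_def
    by (subst AE_distr_iff) auto
qed

lemma star_body_ray:
  fixes L :: "'a::euclidean_space set"
  assumes L: "star_body L" and u: "u \<in> sphere 0 1"
  obtains \<rho> where "radial_fun L u = ereal \<rho>" "\<rho> > 0"
    "\<And>t. 0 < t \<Longrightarrow> t < \<rho> \<Longrightarrow> t *\<^sub>R u \<in> L" "\<And>t. 0 < t \<Longrightarrow> t *\<^sub>R u \<in> L \<Longrightarrow> t \<le> \<rho>"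
proof -
  from L u have pos: "0 < radial_fun L u" "radial_fun L u < \<infinity>" by (auto simp: star_body_def)
  then obtain \<rho> where \<rho>: "radial_fun L u = ereal \<rho>" by (cases "radial_fun L u") auto
  with pos have \<rho>0: "\<rho> > 0" by simp
  have le: "t \<le> \<rho>" if "0 < t" "t *\<^sub>R u \<in> L" for t
  proof -
    have "ereal t \<le> radial_fun L u" unfolding radial_fun_def by (rule SUP_upper) (use that in auto)
    with \<rho> show ?thesis by simp
  qed
  have mem: "t *\<^sub>R u \<in> L" if t: "0 < t" "t < \<rho>" for t
  proof -
    have "ereal t < radial_fun L u" using \<rho> t by simp
    then obtain s where s: "s \<in> {t. t > 0 \<and> t *\<^sub>R u \<in> L}" "ereal t < ereal s"
      unfolding radial_fun_def less_SUP_iff by blast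
    then have "t / s \<in> {0..1}" using t by auto
    then have "(t / s) *\<^sub>R (s *\<^sub>R u) \<in> L" using L s unfolding star_body_def by blast
    then show ?thesis using s by simp
  qed
  show ?thesis using \<rho> \<rho>0 le mem that by blast
qed

lemma ereal_SUP_between:
  fixes a :: real
  assumes a: "a > 0" and T: "{0<..<a} \<subseteq> T" "T \<subseteq> {0<..a}"
  shows "(SUP t\<in>T. ereal t) = ereal a"
proof (rule antisym)
  show "(SUP t\<in>T. ereal t) \<le> ereal a" using T(2) by (intro SUP_least) auto
  show "ereal a \<le> (SUP t\<in>T. ereal t)"
  proof (rule dense_le_bounded[of "ereal 0"])
    show "ereal 0 < ereal a" using a by simp
    fix w assume w: "ereal 0 < w" "w < ereal a"
    then obtain w' where w': "w = ereal w'" by (cases w) auto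
    with w have "w' \<in> T" using T(1) by auto
    then show "w \<le> (SUP t\<in>T. ereal t)" unfolding w' by (rule SUP_upper)
  qed
qed

lemma radial_fun_scale:
  fixes L :: "'a::euclidean_space set"
  assumes L: "star_body L" and u: "u \<in> sphere 0 1" and c: "c > 0"
  shows "radial_fun L (c *\<^sub>R u) = ereal (real_of_ereal (radial_fun L u) / c)"
proof -
  obtain \<rho> where \<rho>: "radial_fun L u = ereal \<rho>" "\<rho> > 0"
    and mem: "\<And>t. 0 < t \<Longrightarrow> t < \<rho> \<Longrightarrow> t *\<^sub>R u \<in> L" and le: "\<And>t. 0 < t \<Longrightarrow> t *\<^sub>R u \<in> L \<Longrightarrow> t \<le> \<rho>"
    by (rule star_body_ray[OF L u]) blast
  have "(SUP t\<in>{t. t > 0 \<and> t *\<^sub>R (c *\<^sub>R u) \<in> L}. ereal t) = ereal (\<rho> / c)"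
  proof (rule ereal_SUP_between)
    show "\<rho> / c > 0" using \<rho> c by simp
    show "{0<..<\<rho> / c} \<subseteq> {t. t > 0 \<and> t *\<^sub>R (c *\<^sub>R u) \<in> L}"
    proof
      fix t assume "t \<in> {0<..<\<rho> / c}"
      then have "0 < t" "0 < t * c" "t * c < \<rho>" using c by (auto simp: field_simps)
      then show "t \<in> {t. t > 0 \<and> t *\<^sub>R (c *\<^sub>R u) \<in> L}" using mem[of "t * c"] c by auto
    qed
    show "{t. t > 0 \<and> t *\<^sub>R (c *\<^sub>R u) \<in> L} \<subseteq> {0<..\<rho> / c}"
    proof
      fix t assume "t \<in> {t. t > 0 \<and> t *\<^sub>R (c *\<^sub>R u) \<in> L}"
      then have "t > 0" "(t * c) *\<^sub>R u \<in> L" by auto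
      then have "t * c \<le> \<rho>" using le[of "t * c"] c by auto
      then show "t \<in> {0<..\<rho> / c}" using \<open>t > 0\<close> c by (auto simp: field_simps)
    qed
  qed
  then have "radial_fun L (c *\<^sub>R u) = ereal (\<rho> / c)" unfolding radial_fun_def .
  then show ?thesis using \<rho> by simp
qed

lemma radial_real_eq:
  fixes L :: "'a::euclidean_space set"
  assumes L: "star_body L"
  shows "real_of_ereal (radial_fun L \<theta>) =
    (if \<theta> = 0 then 0 else real_of_ereal (radial_fun L (\<theta> /\<^sub>R norm \<theta>)) / norm \<theta>)"
proof (cases "\<theta> = 0")
  case True
  have "0 \<in> L" using L interior_subset unfolding star_body_def by blast
  then have "{t. t > 0 \<and> t *\<^sub>R \<theta> \<in> L} = {0<..}" using True by auto
  moreover have "(SUP t\<in>{0<..}. ereal t) = \<infinity>"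
  proof (rule SUP_PInfty)
    fix n :: nat show "\<exists>i\<in>{0<..}. ereal (real n) \<le> ereal i"
      by (rule bexI[of _ "real n + 1"]) auto
  qed
  ultimately show ?thesis using True unfolding radial_fun_def by simp
next
  case False
  have u: "\<theta> /\<^sub>R norm \<theta> \<in> sphere 0 1" using False by simp
  have "\<theta> = norm \<theta> *\<^sub>R (\<theta> /\<^sub>R norm \<theta>)" using False by simp
  then have "radial_fun L \<theta> = radial_fun L (norm \<theta> *\<^sub>R (\<theta> /\<^sub>R norm \<theta>))" by simp
  also have "\<dots> = ereal (real_of_ereal (radial_fun L (\<theta> /\<^sub>R norm \<theta>)) / norm \<theta>)"
    using False by (intro radial_fun_scale[OF L u]) auto
  finally show ?thesis using False by simp
qed

lemma radial_real_measurable: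
  fixes L :: "'a::euclidean_space set"
  assumes L: "star_body L"
  shows "(\<lambda>\<theta>. real_of_ereal (radial_fun L \<theta>)) \<in> borel_measurable borel"
proof -
  let ?r = "\<lambda>u. real_of_ereal (radial_fun L u)"
  have c: "continuous_on (sphere 0 1) ?r" using L by (simp add: star_body_def)
  have m[measurable]: "(\<lambda>u. indicator (sphere (0::'a) 1) u *\<^sub>R ?r u) \<in> borel_measurable borel"
    by (rule borel_measurable_continuous_on_indicator[OF _ c]) simp
  have "(\<lambda>\<theta>::'a. if \<theta> = 0 then 0 else (indicator (sphere (0::'a) 1) (\<theta> /\<^sub>R norm \<theta>) *\<^sub>R ?r (\<theta> /\<^sub>R norm \<theta>)) / norm \<theta>)
     \<in> borel_measurable borel"
    by measurable
  also have "(\<lambda>\<theta>::'a. if \<theta> = 0 then 0 else (indicator (sphere (0::'a) 1) (\<theta> /\<^sub>R norm \<theta>) *\<^sub>R ?r (\<theta> /\<^sub>R norm \<theta>)) / norm \<theta>)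
      = ?r"
    by (rule ext, subst radial_real_eq[OF L]) auto
  finally show ?thesis .
qed

lemma star_polar:
  fixes L :: "'a::euclidean_space set" and g :: "'a \<Rightarrow> real" and p :: real
  assumes L: "star_body L" and gm[measurable]: "g \<in> borel_measurable borel" and g0: "\<And>x. g x \<ge> 0"
    and hom: "\<And>x r. r > 0 \<Longrightarrow> g (r *\<^sub>R x) = r powr p * g x" and p: "p \<ge> 0"
  shows "(\<integral>\<^sup>+x. indicator L x * ennreal (g x) \<partial>lborel) =
     (\<integral>\<^sup>+\<theta>. ennreal (real_of_ereal (radial_fun L \<theta>) powr (real DIM('a) + p) / (real DIM('a) + p) * g \<theta>)
        \<partial>sphere_measure)"
proof -
  have Lc: "compact L" using L by (simp add: star_body_def)
  have [measurable]: "L \<in> sets borel" using Lc by (simp add: borel_compact)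
  obtain k where k: "DIM('a) - 1 = k" by simp
  have kD: "real k + 1 = real DIM('a)" using k DIM_positive[where 'a='a] by linarith
  have "(\<integral>\<^sup>+x. indicator L x * ennreal (g x) \<partial>lborel) =
    (\<integral>\<^sup>+\<theta>. (\<integral>\<^sup>+r. ennreal (indicator {0<..} r * r ^ (DIM('a) - 1)) * (indicator L (r *\<^sub>R \<theta>) * ennreal (g (r *\<^sub>R \<theta>))) \<partial>lborel) \<partial>sphere_measure)"
    by (rule polar_nn) measurable
  also have "\<dots> = (\<integral>\<^sup>+\<theta>. ennreal (real_of_ereal (radial_fun L \<theta>) powr (real DIM('a) + p) / (real DIM('a) + p) * g \<theta>)
        \<partial>sphere_measure)"
  proof (rule nn_integral_cong_AE)
    show "AE \<theta> in sphere_measure.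
      (\<integral>\<^sup>+r. ennreal (indicator {0<..} r * r ^ (DIM('a) - 1)) * (indicator L (r *\<^sub>R \<theta>) * ennreal (g (r *\<^sub>R \<theta>))) \<partial>lborel) =
      ennreal (real_of_ereal (radial_fun L \<theta>) powr (real DIM('a) + p) / (real DIM('a) + p) * g \<theta>)"
      using AE_sphere_measure
    proof eventually_elim
      case (elim \<theta>)
      obtain \<rho> where \<rho>: "radial_fun L \<theta> = ereal \<rho>" "\<rho> > 0"
        and mem: "\<And>t. 0 < t \<Longrightarrow> t < \<rho> \<Longrightarrow> t *\<^sub>R \<theta> \<in> L" and le: "\<And>t. 0 < t \<Longrightarrow> t *\<^sub>R \<theta> \<in> L \<Longrightarrow> t \<le> \<rho>"
        by (metis star_body_ray[OF L elim])
      have "(\<integral>\<^sup>+r. ennreal (indicator {0<..} r * r ^ (DIM('a) - 1)) * (indicator L (r *\<^sub>R \<theta>) * ennreal (g (r *\<^sub>R \<theta>))) \<partial>lborel)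
         = (\<integral>\<^sup>+r. ennreal (g \<theta>) * (ennreal (indicator {0<..} r * r powr (real k + p)) * indicator {..<\<rho>} r) \<partial>lborel)"
      proof (rule nn_integral_cong_AE)
        show "AE r in lborel. ennreal (indicator {0<..} r * r ^ (DIM('a) - 1)) * (indicator L (r *\<^sub>R \<theta>) * ennreal (g (r *\<^sub>R \<theta>))) =
          ennreal (g \<theta>) * (ennreal (indicator {0<..} r * r powr (real k + p)) * indicator {..<\<rho>} r)"
          using AE_lborel_singleton[of \<rho>]
        proof eventually_elim
          case (elim r)
          show ?case
          proof (cases "r > 0")
            case False then show ?thesis by (simp add: indicator_def)
          next
            case True
            show ?thesis
            proof (cases "r < \<rho>")
              case True
              have "r ^ k * (r powr p * g \<theta>) = g \<theta> * r powr (real k + p)"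
                using \<open>r > 0\<close> by (simp add: powr_add powr_realpow)
              then show ?thesis using True \<open>r > 0\<close> mem[of r] hom[of r \<theta>] k
                by (simp add: indicator_def ennreal_mult'[symmetric] g0 mult.commute)
            next
              case False
              then have "r *\<^sub>R \<theta> \<notin> L" using le[of r] \<open>r > 0\<close> elim by force
              then show ?thesis using False by (simp add: indicator_def)
            qed
          qed
        qed
      qed
      also have "\<dots> = ennreal (g \<theta>) * (\<integral>\<^sup>+r. ennreal (indicator {0<..} r * r powr (real k + p)) * indicator {..<\<rho>} r \<partial>lborel)"
        by (rule nn_integral_cmult) simp
      also have "\<dots> = ennreal (g \<theta>) * ennreal (\<rho> powr (real k + p + 1) / (real k + p + 1))"
        using \<rho> p by (subst nn_integral_powr_lessThan) auto
      also have "\<dots> = ennreal (real_of_ereal (radial_fun L \<theta>) powr (real DIM('a) + p) / (real DIM('a) + p) * g \<theta>)"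
      proof -
        have e: "real k + p + 1 = real DIM('a) + p" using kD by simp
        show ?thesis unfolding e using \<rho> p g0[of \<theta>] by (simp add: ennreal_mult'[symmetric] mult.commute)
      qed
      finally show ?case .
    qed
  qed
  finally show ?thesis .
qed


lemma supp_fun_upper:
  fixes G :: "'a::real_inner set"
  assumes R: "\<And>y. y \<in> G \<Longrightarrow> norm y \<le> R" and y: "y \<in> G"
  shows "inner y x \<le> supp_fun G x"
proof -
  have "bdd_above ((\<lambda>y. inner y x) ` G)"
  proof (rule bdd_aboveI2)
    fix z assume "z \<in> G"
    have "inner z x \<le> norm z * norm x" by (rule norm_cauchy_schwarz)
    also have "\<dots> \<le> R * norm x" using R[OF \<open>z \<in> G\<close>] by (intro mult_right_mono) auto
    finally show "inner z x \<le> R * norm x" .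
  qed
  then show ?thesis unfolding supp_fun_def using y by (rule cSUP_upper2) simp
qed

lemma supp_fun_least:
  fixes G :: "'a::real_inner set"
  assumes "G \<noteq> {}" "\<And>y. y \<in> G \<Longrightarrow> inner y x \<le> c"
  shows "supp_fun G x \<le> c"
  unfolding supp_fun_def using assms by (intro cSUP_least) auto

lemma supp_fun_nonneg:
  fixes G :: "'a::real_inner set"
  assumes R: "\<And>y. y \<in> G \<Longrightarrow> norm y \<le> R" and "0 \<in> G"
  shows "0 \<le> supp_fun G x"
  using supp_fun_upper[OF R \<open>0 \<in> G\<close>, of x] by simp

lemma supp_fun_add:
  fixes G :: "'a::real_inner set"
  assumes R: "\<And>y. y \<in> G \<Longrightarrow> norm y \<le> R" and ne: "G \<noteq> {}"
  shows "supp_fun G (x + z) \<le> supp_fun G x + supp_fun G z"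
proof (rule supp_fun_least[OF ne])
  fix y assume "y \<in> G"
  then show "inner y (x + z) \<le> supp_fun G x + supp_fun G z"
    using supp_fun_upper[OF R \<open>y \<in> G\<close>, of x] supp_fun_upper[OF R \<open>y \<in> G\<close>, of z] by (simp add: inner_add_right)
qed

lemma supp_fun_scale:
  fixes G :: "'a::real_inner set"
  assumes R: "\<And>y. y \<in> G \<Longrightarrow> norm y \<le> R" and ne: "G \<noteq> {}" and c: "c \<ge> 0"
  shows "supp_fun G (c *\<^sub>R x) = c * supp_fun G x"
proof (cases "c = 0")
  case True
  then show ?thesis using ne unfolding supp_fun_def by simp
next
  case False
  with c have c: "c > 0" by simp
  show ?thesis
  proof (rule antisym)
    show "supp_fun G (c *\<^sub>R x) \<le> c * supp_fun G x"
    proof (rule supp_fun_least[OF ne])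
      fix y assume "y \<in> G"
      then show "inner y (c *\<^sub>R x) \<le> c * supp_fun G x"
        using supp_fun_upper[OF R \<open>y \<in> G\<close>, of x] c by simp
    qed
    have "supp_fun G x \<le> supp_fun G (c *\<^sub>R x) / c"
    proof (rule supp_fun_least[OF ne])
      fix y assume "y \<in> G"
      then show "inner y x \<le> supp_fun G (c *\<^sub>R x) / c"
        using supp_fun_upper[OF R \<open>y \<in> G\<close>, of "c *\<^sub>R x"] c by (simp add: field_simps)
    qed
    then show "c * supp_fun G x \<le> supp_fun G (c *\<^sub>R x)" using c by (simp add: field_simps)
  qed
qed

lemma supp_fun_lip:
  fixes G :: "'a::real_inner set"
  assumes R: "\<And>y. y \<in> G \<Longrightarrow> norm y \<le> R" and ne: "G \<noteq> {}"
  shows "supp_fun G x \<le> supp_fun G z + R * norm (x - z)"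
proof (rule supp_fun_least[OF ne])
  fix y assume y: "y \<in> G"
  have "inner y x = inner y z + inner y (x - z)" by (simp add: inner_diff_right)
  also have "inner y (x - z) \<le> norm y * norm (x - z)" by (rule norm_cauchy_schwarz)
  also have "\<dots> \<le> R * norm (x - z)" using R[OF y] by (intro mult_right_mono) auto
  finally show "inner y x \<le> supp_fun G z + R * norm (x - z)"
    using supp_fun_upper[OF R y, of z] by simp
qed

lemma supp_fun_continuous:
  fixes G :: "'a::real_inner set"
  assumes R: "\<And>y. y \<in> G \<Longrightarrow> norm y \<le> R" and ne: "G \<noteq> {}"
  shows "continuous_on UNIV (supp_fun G)"
proof -
  have R0: "R \<ge> 0" using ne R norm_ge_zero order_trans by blast
  have "dist (supp_fun G x) (supp_fun G z) \<le> (R + 1) * dist x z" for x z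
    using supp_fun_lip[OF R ne, of x z] supp_fun_lip[OF R ne, of z x] R0
    by (simp add: dist_real_def dist_norm norm_minus_commute abs_le_iff algebra_simps)
       (smt (verit) mult_nonneg_nonneg norm_ge_zero)
  then have "lipschitz_on (R + 1) UNIV (supp_fun G)" using R0 by (intro lipschitz_onI) auto
  then show ?thesis by (rule lipschitz_on_continuous_on)
qed

lemma supp_fun_bound:
  fixes G :: "'a::real_inner set"
  assumes R: "\<And>y. y \<in> G \<Longrightarrow> norm y \<le> R" and ne: "G \<noteq> {}"
  shows "supp_fun G x \<le> R * norm x"
  using supp_fun_lip[OF R ne, of x 0] supp_fun_scale[OF R ne, of 0 0] by simp

section \<open>Wulff shapes of sublinear functions\<close>

lemma wulff_supporting:
  fixes H :: "'b::euclidean_space \<Rightarrow> real"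
  assumes add: "\<And>x y. H (x + y) \<le> H x + H y" and hom: "\<And>c x. c \<ge> 0 \<Longrightarrow> H (c *\<^sub>R x) = c * H x"
  shows "\<exists>y. (\<forall>x. inner y x \<le> H x) \<and> inner y v = H v"
proof -
  have H0: "H 0 = 0" using hom[of 0 0] by simp
  let ?S = "{(v, H v)}"
  let ?T = "{(x, t). H x < t} :: ('b \<times> real) set"
  have cT: "convex ?T"
    unfolding convex_def
  proof (clarsimp)
    fix x1 t1 x2 t2 and u w :: real
    assume h: "H x1 < t1" "H x2 < t2" "0 \<le> u" "0 \<le> w" "u + w = 1"
    have "H (u *\<^sub>R x1 + w *\<^sub>R x2) \<le> u * H x1 + w * H x2"
      using add[of "u *\<^sub>R x1" "w *\<^sub>R x2"] hom[of u x1] hom[of w x2] h by simp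
    also have "\<dots> < u * t1 + w * t2"
    proof -
      have "u * H x1 \<le> u * t1" "w * H x2 \<le> w * t2" using h by (auto intro: mult_left_mono)
      moreover have "u > 0 \<or> w > 0" using h by auto
      ultimately show ?thesis using h by (auto intro: add_less_le_mono add_le_less_mono)
    qed
    finally show "H (u *\<^sub>R x1 + w *\<^sub>R x2) < u * t1 + w * t2" .
  qed
  have disj: "?S \<inter> ?T = {}" by auto
  have Tne: "?T \<noteq> {}"
  proof -
    have "(0, H 0 + 1) \<in> ?T" by simp
    then show ?thesis by blast
  qed
  have "\<exists>a b. a \<noteq> 0 \<and> (\<forall>z\<in>?S. inner a z \<le> b) \<and> (\<forall>z\<in>?T. inner a z \<ge> b)"
    by (rule separating_hyperplane_sets[OF convex_singleton cT _ Tne disj]) simp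
  then obtain a b where ab: "a \<noteq> 0" "\<forall>z\<in>?S. inner a z \<le> b" "\<forall>z\<in>?T. inner a z \<ge> b"
    by blast
  obtain a1 a2 where a: "a = (a1, a2)" by (cases a)
  have S: "inner a1 v + a2 * H v \<le> b" using ab(2) a by (simp add: inner_Pair)
  have T: "inner a1 x + a2 * t \<ge> b" if "H x < t" for x t
    using ab(3) a that by (auto simp: inner_Pair)
  have a2: "a2 > 0"
  proof (rule ccontr)
    assume "\<not> a2 > 0"
    then consider "a2 < 0" | "a2 = 0" by linarith
    then show False
    proof cases
      case 1
      define t where "t = max (H v + 1) ((b - inner a1 v) / a2 + 1)"
      have "H v < t" unfolding t_def by simp
      then have "inner a1 v + a2 * t \<ge> b" by (rule T)
      moreover have "a2 * t \<le> a2 * ((b - inner a1 v) / a2 + 1)"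
        using 1 unfolding t_def by (intro mult_left_mono_neg) auto
      moreover have "a2 * ((b - inner a1 v) / a2 + 1) = b - inner a1 v + a2" using 1 by (simp add: field_simps)
      ultimately show False using 1 by linarith
    next
      case 2
      then have a1: "a1 \<noteq> 0" using ab(1) a by (auto simp: zero_prod_def)
      have "inner a1 (v - a1) \<ge> b" using T[of "v - a1" "H (v - a1) + 1"] 2 by simp
      with S 2 have "inner a1 a1 \<le> 0" by (simp add: inner_diff_right)
      with a1 show False by (metis inner_gt_zero_iff not_le)
    qed
  qed
  define y where "y = - (1 / a2) *\<^sub>R a1"
  have key: "H v - inner y v \<le> H x - inner y x" for x
  proof (rule field_le_epsilon)
    fix e :: real assume e: "e > 0"
    have "inner a1 x + a2 * (H x + e) \<ge> b" by (rule T) (use e in simp)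
    with S have "inner a1 v + a2 * H v \<le> inner a1 x + a2 * (H x + e)" by linarith
    then have "(inner a1 v + a2 * H v) / a2 \<le> (inner a1 x + a2 * (H x + e)) / a2"
      using a2 by (intro divide_right_mono) auto
    then show "H v - inner y v \<le> H x - inner y x + e"
      using a2 unfolding y_def by (simp add: field_simps)
  qed
  have c1: "H v - inner y v \<le> 0" using key[of 0] H0 by simp
  have c2: "H v - inner y v \<ge> 0"
    using key[of "2 *\<^sub>R v"] hom[of 2 v] by (simp add: inner_scaleR_right)
  have "\<forall>x. inner y x \<le> H x" using key c2 by (smt (verit))
  moreover have "inner y v = H v" using c1 c2 by simp
  ultimately show ?thesis by blast
qed

lemma wulff_supp:
  fixes H :: "'b::euclidean_space \<Rightarrow> real"
  assumes add: "\<And>x y. H (x + y) \<le> H x + H y" and hom: "\<And>c x. c \<ge> 0 \<Longrightarrow> H (c *\<^sub>R x) = c * H x"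
  shows "supp_fun {y. \<forall>x. inner y x \<le> H x} v = H v"
proof -
  obtain y where y: "\<forall>x. inner y x \<le> H x" "inner y v = H v"
    using wulff_supporting[OF add hom] by blast
  show ?thesis unfolding supp_fun_def
  proof (rule cSup_eq_maximum)
    show "H v \<in> (\<lambda>y. inner y v) ` {y. \<forall>x. inner y x \<le> H x}"
      using y by (intro image_eqI[of _ _ y]) auto
  qed auto
qed

lemma polar_wulff_inverse:
  fixes H :: "'b::euclidean_space \<Rightarrow> real"
  assumes add: "\<And>x y. H (x + y) \<le> H x + H y" and hom: "\<And>c x. c \<ge> 0 \<Longrightarrow> H (c *\<^sub>R x) = c * H x"
    and nn: "\<And>x. H x \<ge> 0"
  shows "real_of_ereal (inverse (radial_fun (polar {y. \<forall>x. inner y x \<le> H x}) \<theta>)) = H \<theta>"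
proof -
  have P: "polar {y. \<forall>x. inner y x \<le> H x} = {x. H x \<le> 1}"
    unfolding polar_def using wulff_supp[OF add hom] by simp
  have set: "{t. t > 0 \<and> t *\<^sub>R \<theta> \<in> {x. H x \<le> 1}} = {t. t > 0 \<and> t * H \<theta> \<le> 1}"
    using hom by auto
  show ?thesis
  proof (cases "H \<theta> = 0")
    case True
    have "(SUP t\<in>{0<..}. ereal t) = \<infinity>"
    proof (rule SUP_PInfty)
      fix n :: nat show "\<exists>i\<in>{0<..}. ereal (real n) \<le> ereal i"
        by (rule bexI[of _ "real n + 1"]) auto
    qed
    moreover have "{t. t > 0 \<and> t * H \<theta> \<le> 1} = {0<..}" using True by auto
    ultimately have "radial_fun (polar {y. \<forall>x. inner y x \<le> H x}) \<theta> = \<infinity>"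
      unfolding radial_fun_def P set by simp
    then show ?thesis using True by simp
  next
    case False
    then have Hp: "H \<theta> > 0" using nn[of \<theta>] by simp
    have "(SUP t\<in>{t. t > 0 \<and> t * H \<theta> \<le> 1}. ereal t) = ereal (1 / H \<theta>)"
      by (rule ereal_SUP_between) (use Hp in \<open>auto simp: field_simps\<close>)
    then have "radial_fun (polar {y. \<forall>x. inner y x \<le> H x}) \<theta> = ereal (1 / H \<theta>)"
      unfolding radial_fun_def P set .
    then show ?thesis using Hp by simp
  qed
qed

section \<open>A Minkowski inequality\<close>

lemma powr_convex_0:
  fixes x y u w p :: real
  assumes p: "p \<ge> 1" and x: "x \<ge> 0" and y: "y \<ge> 0" and u: "u \<ge> 0" and w: "w \<ge> 0" and uw: "u + w = 1"
  shows "(u * x + w * y) powr p \<le> u * x powr p + w * y powr p"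
proof -
  have sc: "(s * z) powr p \<le> s * z powr p" if "0 \<le> s" "s \<le> 1" "z \<ge> 0" for s z
  proof -
    have "(s * z) powr p = s powr p * z powr p" using that by (simp add: powr_mult)
    also have "s powr p \<le> s powr 1" using that p by (intro powr_mono') auto
    then have "s powr p * z powr p \<le> s * z powr p" using that by (cases "s = 0") (auto intro: mult_right_mono)
    finally show ?thesis .
  qed
  consider "x = 0" | "y = 0" | "x > 0" "y > 0" using x y by linarith
  then show ?thesis
  proof cases
    case 1
    have "w \<le> 1" using u uw by linarith
    then show ?thesis using 1 sc[of w y] w uw y by simp
  next
    case 2
    have "u \<le> 1" using w uw by linarith
    then show ?thesis using 2 sc[of u x] u uw x by simp
  next
    case 3
    have cv: "convex_on {0<..} (\<lambda>x::real. x powr p)" by (rule powr_convex[OF p])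
    have w1: "w \<le> 1" using u uw by linarith
    have "((1 - w) *\<^sub>R x + w *\<^sub>R y) powr p \<le> (1 - w) * x powr p + w * y powr p"
      using convex_onD[OF cv, of w x y] 3 w w1 by simp
    moreover have "u = 1 - w" using uw by simp
    ultimately show ?thesis by simp
  qed
qed

lemma powr_pointwise_minkowski:
  fixes a b A B p :: real
  assumes p: "p \<ge> 1" and a: "a \<ge> 0" and b: "b \<ge> 0" and A: "A > 0" and B: "B > 0"
  shows "(a + b) powr p \<le> (A + B) powr (p - 1) * (A powr (1 - p) * a powr p + B powr (1 - p) * b powr p)"
proof -
  define u where "u = A / (A + B)"
  define w where "w = B / (A + B)"
  have AB: "A + B > 0" using A B by simp
  have uw: "u \<ge> 0" "w \<ge> 0" "u + w = 1" using A B AB unfolding u_def w_def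
    by (auto simp: add_divide_distrib[symmetric])
  have e1: "u * (a / A) = a / (A + B)" unfolding u_def using A by simp
  have e2: "w * (b / B) = b / (A + B)" unfolding w_def using B by simp
  have eq: "(a + b) / (A + B) = u * (a / A) + w * (b / B)"
    unfolding e1 e2 by (simp add: add_divide_distrib)
  have "((a + b) / (A + B)) powr p \<le> u * (a / A) powr p + w * (b / B) powr p"
    unfolding eq by (rule powr_convex_0[OF p _ _ uw]) (use a b A B in auto)
  then have "(a + b) powr p / (A + B) powr p \<le> u * (a powr p / A powr p) + w * (b powr p / B powr p)"
    using a b A B by (simp add: powr_divide)
  then have "(a + b) powr p \<le> (A + B) powr p * (u * (a powr p / A powr p) + w * (b powr p / B powr p))"
    using A B by (simp add: divide_le_eq mult.commute)
  also have "\<dots> = (A + B) powr (p - 1) * (A powr (1 - p) * a powr p + B powr (1 - p) * b powr p)"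
  proof -
    have e1: "(A + B) powr p = (A + B) powr (p - 1) * (A + B)" using A B by (simp add: powr_diff)
    have e2: "A powr (1 - p) = A / A powr p" using A by (simp add: powr_diff)
    have e3: "B powr (1 - p) = B / B powr p" using B by (simp add: powr_diff)
    have uA: "(A + B) * u = A" unfolding u_def using AB by simp
    have wB: "(A + B) * w = B" unfolding w_def using AB by simp
    have "(A + B) powr p * (u * (a powr p / A powr p) + w * (b powr p / B powr p)) =
        (A + B) powr (p - 1) * (((A + B) * u) * (a powr p / A powr p) + ((A + B) * w) * (b powr p / B powr p))"
      unfolding e1 by (simp only: algebra_simps)
    also have "\<dots> = (A + B) powr (p - 1) * (A * (a powr p / A powr p) + B * (b powr p / B powr p))"
      by (simp only: uA wB)
    also have "\<dots> = (A + B) powr (p - 1) * (A powr (1 - p) * a powr p + B powr (1 - p) * b powr p)"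
      unfolding e2 e3 by simp
    finally show ?thesis .
  qed
  finally show ?thesis .
qed

lemma minkowski_le:
  fixes M :: "'x measure" and f g h :: "'x \<Rightarrow> real" and p :: real
  assumes p: "p \<ge> 1"
    and f0: "\<And>x. f x \<ge> 0" and g0: "\<And>x. g x \<ge> 0" and h0: "\<And>x. h x \<ge> 0"
    and hfg: "\<And>x. h x \<le> f x + g x"
    and fi: "integrable M (\<lambda>x. f x powr p)" and gi: "integrable M (\<lambda>x. g x powr p)"
    and hi: "integrable M (\<lambda>x. h x powr p)"
  shows "(\<integral>x. h x powr p \<partial>M) powr (1/p) \<le> (\<integral>x. f x powr p \<partial>M) powr (1/p) + (\<integral>x. g x powr p \<partial>M) powr (1/p)"
proof -
  define If where "If = (\<integral>x. f x powr p \<partial>M)"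
  define Ig where "Ig = (\<integral>x. g x powr p \<partial>M)"
  define Ih where "Ih = (\<integral>x. h x powr p \<partial>M)"
  have If0: "If \<ge> 0" unfolding If_def by (rule integral_nonneg_AE) auto
  have Ig0: "Ig \<ge> 0" unfolding Ig_def by (rule integral_nonneg_AE) auto
  have Ih0: "Ih \<ge> 0" unfolding Ih_def by (rule integral_nonneg_AE) auto
  have pp: "p > 0" using p by simp
  show ?thesis unfolding If_def[symmetric] Ig_def[symmetric] Ih_def[symmetric]
  proof (rule field_le_epsilon)
    fix e :: real assume e: "e > 0"
    define A where "A = If powr (1/p) + e / 2"
    define B where "B = Ig powr (1/p) + e / 2"
    have A: "A > 0" and B: "B > 0" using e unfolding A_def B_def by (auto intro: add_nonneg_pos)
    have IfA: "If \<le> A powr p"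
    proof -
      have "If = (If powr (1/p)) powr p" using If0 pp by (simp add: powr_powr)
      also have "\<dots> \<le> A powr p" unfolding A_def using e pp by (intro powr_mono2) auto
      finally show ?thesis .
    qed
    have IgB: "Ig \<le> B powr p"
    proof -
      have "Ig = (Ig powr (1/p)) powr p" using Ig0 pp by (simp add: powr_powr)
      also have "\<dots> \<le> B powr p" unfolding B_def using e pp by (intro powr_mono2) auto
      finally show ?thesis .
    qed
    have "Ih \<le> (\<integral>x. (A + B) powr (p - 1) * (A powr (1 - p) * f x powr p + B powr (1 - p) * g x powr p) \<partial>M)"
      unfolding Ih_def
    proof (rule integral_mono)
      show "integrable M (\<lambda>x. (A + B) powr (p - 1) * (A powr (1 - p) * f x powr p + B powr (1 - p) * g x powr p))"
        using fi gi by (intro integrable_mult_right integrable_add) auto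
      fix x
      have "h x powr p \<le> (f x + g x) powr p" using h0 hfg pp by (intro powr_mono2) auto
      also have "\<dots> \<le> (A + B) powr (p - 1) * (A powr (1 - p) * f x powr p + B powr (1 - p) * g x powr p)"
        by (rule powr_pointwise_minkowski[OF p f0 g0 A B])
      finally show "h x powr p \<le> (A + B) powr (p - 1) * (A powr (1 - p) * f x powr p + B powr (1 - p) * g x powr p)" .
    qed (rule hi)
    also have "\<dots> = (A + B) powr (p - 1) * (A powr (1 - p) * If + B powr (1 - p) * Ig)"
      unfolding If_def Ig_def using fi gi by simp
    also have "\<dots> \<le> (A + B) powr (p - 1) * (A powr (1 - p) * A powr p + B powr (1 - p) * B powr p)"
      using IfA IgB by (intro mult_left_mono add_mono) auto
    also have "\<dots> = (A + B) powr p"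
      using A B by (simp add: powr_add[symmetric] powr_diff field_simps)
    finally have "Ih \<le> (A + B) powr p" .
    then have "Ih powr (1/p) \<le> ((A + B) powr p) powr (1/p)" using Ih0 pp by (intro powr_mono2) auto
    also have "\<dots> = A + B" using A B pp by (simp add: powr_powr)
    finally show "Ih powr (1/p) \<le> If powr (1/p) + Ig powr (1/p) + e" unfolding A_def B_def by simp
  qed
qed

lemma lp_sublinear:
  fixes M :: "'x measure" and F :: "'b::real_vector \<Rightarrow> 'x \<Rightarrow> real" and p :: real
  assumes p: "p \<ge> 1"
    and F0: "\<And>v x. F v x \<ge> 0"
    and Fadd: "\<And>v w x. F (v + w) x \<le> F v x + F w x"
    and Fhom: "\<And>c v x. c \<ge> 0 \<Longrightarrow> F (c *\<^sub>R v) x = c * F v x"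
    and Fi: "\<And>v. integrable M (\<lambda>x. F v x powr p)"
  shows "(\<integral>x. F (v + w) x powr p \<partial>M) powr (1/p) \<le>
           (\<integral>x. F v x powr p \<partial>M) powr (1/p) + (\<integral>x. F w x powr p \<partial>M) powr (1/p)"
    and "c \<ge> 0 \<Longrightarrow> (\<integral>x. F (c *\<^sub>R v) x powr p \<partial>M) powr (1/p) = c * (\<integral>x. F v x powr p \<partial>M) powr (1/p)"
proof -
  show "(\<integral>x. F (v + w) x powr p \<partial>M) powr (1/p) \<le>
           (\<integral>x. F v x powr p \<partial>M) powr (1/p) + (\<integral>x. F w x powr p \<partial>M) powr (1/p)"
    by (rule minkowski_le[OF p F0 F0 F0 Fadd Fi Fi Fi])
  assume c: "c \<ge> 0"
  have pp: "p > 0" using p by simp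
  have I0: "(\<integral>x. F v x powr p \<partial>M) \<ge> 0" by (rule integral_nonneg_AE) auto
  have "(\<integral>x. F (c *\<^sub>R v) x powr p \<partial>M) = (\<integral>x. c powr p * F v x powr p \<partial>M)"
    using c F0 by (simp add: Fhom powr_mult)
  also have "\<dots> = c powr p * (\<integral>x. F v x powr p \<partial>M)" by simp
  finally show "(\<integral>x. F (c *\<^sub>R v) x powr p \<partial>M) powr (1/p) = c * (\<integral>x. F v x powr p \<partial>M) powr (1/p)"
    using c I0 pp by (simp add: powr_mult powr_powr)
qed


lemma hausdorff_outer_empty: "hausdorff_outer s ({} :: 'a::euclidean_space set) = 0"
  unfolding hausdorff_outer_def
  apply (rule antisym)
   apply (rule SUP_least)
   apply (rule INF_lower2[of "\<lambda>_. {}"])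
    apply auto
  done

lemma hausdorff_outer_mono:
  assumes "A \<subseteq> B"
  shows "hausdorff_outer s A \<le> hausdorff_outer s B"
  unfolding hausdorff_outer_def
  apply (rule SUP_mono)
  apply (erule bexI[rotated])
  apply (rule INF_superset_mono)
  using assms apply auto
  done

lemma hausdorff_outer_le_finite_cover:
  fixes A :: "'a::euclidean_space set" and C :: "'i \<Rightarrow> 'i \<Rightarrow> 'a set"
  assumes cov: "\<And>\<delta>. \<delta> > 0 \<Longrightarrow> \<exists>I (C :: 'i \<Rightarrow> 'a set). finite I \<and> A \<subseteq> (\<Union>i\<in>I. C i) \<and>
      (\<forall>i\<in>I. bounded (C i) \<and> diameter (C i) \<le> \<delta>) \<and>
      (\<Sum>i\<in>I. unit_ball_vol (real s) * (diameter (C i) / 2) ^ s) \<le> B"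
  shows "hausdorff_outer s A \<le> ennreal B"
  unfolding hausdorff_outer_def
proof (rule SUP_least)
  fix \<delta> :: real assume "\<delta> \<in> {0<..}"
  then have d: "\<delta> > 0" by simp
  obtain I and C :: "'i \<Rightarrow> 'a set" where I: "finite I" "A \<subseteq> (\<Union>i\<in>I. C i)"
    "\<forall>i\<in>I. bounded (C i) \<and> diameter (C i) \<le> \<delta>"
    "(\<Sum>i\<in>I. unit_ball_vol (real s) * (diameter (C i) / 2) ^ s) \<le> B"
    using cov[OF d] by blast
  obtain e where e: "bij_betw e {0..<card I} I" using ex_bij_betw_nat_finite[OF I(1)] by blast
  define C' where "C' n = (if n < card I then C (e n) else {})" for n
  have C'I: "n < card I \<Longrightarrow> C' n = C (e n)" for n unfolding C'_def by simp
  have eI: "n < card I \<Longrightarrow> e n \<in> I" for n using e by (auto simp: bij_betw_def)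
  have mem: "C' \<in> {C :: nat \<Rightarrow> 'a set. A \<subseteq> (\<Union>i. C i) \<and> (\<forall>i. bounded (C i) \<and> diameter (C i) \<le> \<delta>)}"
  proof safe
    fix x assume "x \<in> A"
    then obtain i where i: "i \<in> I" "x \<in> C i" using I(2) by blast
    have "i \<in> e ` {0..<card I}" using e i by (simp add: bij_betw_def)
    then obtain n where n: "n < card I" "e n = i" by auto
    then show "x \<in> (\<Union>i. C' i)" using i C'I by auto
  next
    fix n show "bounded (C' n)" "diameter (C' n) \<le> \<delta>"
      using I(3) eI d unfolding C'_def by auto
  qed
  have term_le: "(if C' n = {} then 0 else ennreal (unit_ball_vol (real s) * (diameter (C' n) / 2) ^ s)) \<le>
      ennreal (unit_ball_vol (real s) * (diameter (C' n) / 2) ^ s)" for n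
    by auto
  have "(\<Sum>n. if C' n = {} then 0 else ennreal (unit_ball_vol (real s) * (diameter (C' n) / 2) ^ s)) =
      (\<Sum>n\<in>{0..<card I}. if C' n = {} then 0 else ennreal (unit_ball_vol (real s) * (diameter (C' n) / 2) ^ s))"
    by (rule suminf_finite) (auto simp: C'_def)
  also have "\<dots> \<le> (\<Sum>n\<in>{0..<card I}. ennreal (unit_ball_vol (real s) * (diameter (C' n) / 2) ^ s))"
    by (intro sum_mono term_le)
  also have "\<dots> = (\<Sum>n\<in>{0..<card I}. ennreal (unit_ball_vol (real s) * (diameter (C (e n)) / 2) ^ s))"
    by (intro sum.cong) (auto simp: C'I)
  also have "\<dots> = (\<Sum>i\<in>I. ennreal (unit_ball_vol (real s) * (diameter (C i) / 2) ^ s))"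
    by (rule sum.reindex_bij_betw[OF e])
  also have "\<dots> = ennreal (\<Sum>i\<in>I. unit_ball_vol (real s) * (diameter (C i) / 2) ^ s)"
    using I(3) by (intro sum_ennreal) (auto intro!: mult_nonneg_nonneg zero_le_power diameter_ge_0)
  also have "\<dots> \<le> ennreal B" using I(4) by (rule ennreal_leI)
  finally show "(INF C\<in>{C :: nat \<Rightarrow> 'a set. A \<subseteq> (\<Union>i. C i) \<and> (\<forall>i. bounded (C i) \<and> diameter (C i) \<le> \<delta>)}.
        (\<Sum>i. if C i = {} then 0 else ennreal (unit_ball_vol (real s) * (diameter (C i) / 2) ^ s))) \<le> ennreal B"
    by (rule INF_lower2[OF mem])
qed

definition mx :: "real^'n \<Rightarrow> real" where "mx z = Max (range (\<lambda>i. \<bar>z$i\<bar>))"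

lemma mx_ge: "\<bar>z$i\<bar> \<le> mx z"
  unfolding mx_def by (rule Max_ge) auto

lemma mx_ex: "\<exists>i. \<bar>z$i\<bar> = mx z"
proof -
  have "Max (range (\<lambda>i. \<bar>z$i\<bar>)) \<in> range (\<lambda>i. \<bar>z$i\<bar>)" by (rule Max_in) auto
  then obtain i where "Max (range (\<lambda>i. \<bar>z$i\<bar>)) = \<bar>z$i\<bar>" by blast
  then show ?thesis unfolding mx_def by (intro exI[of _ i]) simp
qed

lemma mx_le_norm: "mx z \<le> norm z"
  using mx_ex[of z] component_le_norm_cart by metis

lemma norm_le_mx: "norm (z::real^'n) \<le> real CARD('n) * mx z"
proof -
  have "norm z \<le> (\<Sum>i\<in>UNIV. \<bar>z$i\<bar>)" by (rule norm_le_l1_cart)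
  also have "\<dots> \<le> (\<Sum>i\<in>(UNIV::'n set). mx z)" by (rule sum_mono) (rule mx_ge)
  also have "\<dots> = real CARD('n) * mx z" by simp
  finally show ?thesis .
qed

lemma mx_lip: "mx z \<le> mx w + norm (z - w)"
proof -
  obtain i where i: "\<bar>z$i\<bar> = mx z" using mx_ex by blast
  have "\<bar>z$i\<bar> \<le> \<bar>w$i\<bar> + \<bar>(z - w)$i\<bar>" by simp
  also have "\<dots> \<le> mx w + norm (z - w)" using mx_ge[of w i] component_le_norm_cart[of "z - w" i] by simp
  finally show ?thesis using i by simp
qed

lemma mx_continuous: "continuous_on UNIV mx"
proof -
  have "dist (mx x) (mx z) \<le> 1 * dist x z" for x z
    using mx_lip[of x z] mx_lip[of z x] by (simp add: dist_real_def dist_norm norm_minus_commute abs_le_iff)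
  then have "lipschitz_on 1 UNIV mx" by (intro lipschitz_onI) auto
  then show ?thesis by (rule lipschitz_on_continuous_on)
qed

section \<open>Normal points are nearest points of a cube surface\<close>

lemma closest_point_normal:
  fixes K :: "'a::euclidean_space set"
  assumes K: "convex K" "closed K" and x: "x \<in> K" and n: "\<forall>y\<in>K. inner v (y - x) \<le> 0" and t: "t \<ge> 0"
  shows "closest_point K (x + t *\<^sub>R v) = x"
proof -
  have "dist (x + t *\<^sub>R v) x \<le> dist (x + t *\<^sub>R v) y" if y: "y \<in> K" for y
  proof -
    have "inner (x - y) v = - inner v (y - x)" by (simp add: inner_diff_left inner_diff_right inner_commute)
    then have iv: "inner (x - y) v \<ge> 0" using n y by simp
    have "norm (t *\<^sub>R v) \<le> norm ((x - y) + t *\<^sub>R v)"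
      unfolding norm_le using iv t
      by (simp add: inner_add_left inner_add_right inner_commute)
    then show ?thesis by (simp add: dist_norm algebra_simps)
  qed
  then show ?thesis by (intro closest_point_unique[symmetric] K x) auto
qed

lemma normal_point_in_image:
  fixes K :: "(real^'n) set"
  assumes K: "convex K" "closed K" and KR: "K \<subseteq> ball 0 R" and x: "x \<in> K" and v: "norm v = 1"
    and n: "\<forall>y\<in>K. inner v (y - x) \<le> 0"
  shows "x \<in> closest_point K ` {z. mx z = R}"
proof -
  let ?\<phi> = "\<lambda>t. mx (x + t *\<^sub>R v)"
  define T where "T = R + real CARD('n) * R"
  have xR: "norm x < R" using KR x by auto
  then have R: "R > 0" using norm_ge_zero le_less_trans by blast
  have T0: "0 \<le> T" unfolding T_def using R by simp
  have c: "continuous_on {0..T} ?\<phi>"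
    by (rule continuous_on_compose2[OF mx_continuous], intro continuous_intros, simp)
  have a: "?\<phi> 0 \<le> R" using mx_le_norm[of x] xR by simp
  have b: "R \<le> ?\<phi> T"
  proof -
    have "T - R \<le> norm (x + T *\<^sub>R v)"
      using norm_triangle_ineq2[of "T *\<^sub>R v" "- x"] xR v T0 by (simp add: algebra_simps)
    also have "\<dots> \<le> real CARD('n) * ?\<phi> T" by (rule norm_le_mx)
    finally have "real CARD('n) * R \<le> real CARD('n) * ?\<phi> T" unfolding T_def by simp
    then show ?thesis by simp
  qed
  obtain t where t: "0 \<le> t" "t \<le> T" "?\<phi> t = R" using IVT'[of ?\<phi> 0 R T, OF a b T0 c] by blast
  have "closest_point K (x + t *\<^sub>R v) = x" by (rule closest_point_normal[OF K x n t(1)])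
  then show ?thesis using t(3) by force
qed

section \<open>A grid on the cube surface\<close>

definition Ic :: "nat \<Rightarrow> ('n \<times> bool \<times> ('n \<Rightarrow> nat)) set" where
  "Ic N = (SIGMA i:UNIV. UNIV \<times> PiE (UNIV - {i}) (\<lambda>_. {..<N}))"

definition cell :: "real \<Rightarrow> nat \<Rightarrow> ('n \<times> bool \<times> ('n \<Rightarrow> nat)) \<Rightarrow> (real^'n) set" where
  "cell R N = (\<lambda>(i, s, k). {z. z$i = (if s then R else - R) \<and>
      (\<forall>j. j \<noteq> i \<longrightarrow> - R + 2 * R * real (k j) / N \<le> z$j \<and> z$j \<le> - R + 2 * R * (real (k j) + 1) / N)})"

lemma finite_Ic: "finite (Ic N :: ('n::finite \<times> bool \<times> ('n \<Rightarrow> nat)) set)"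
  unfolding Ic_def by (intro finite_SigmaI finite_cartesian_product finite_PiE) auto

lemma card_Ic: "card (Ic N :: ('n::finite \<times> bool \<times> ('n \<Rightarrow> nat)) set) = CARD('n) * (2 * N ^ (CARD('n) - 1))"
proof -
  have "card (Ic N :: ('n \<times> bool \<times> ('n \<Rightarrow> nat)) set) =
      (\<Sum>i\<in>(UNIV::'n set). card ((UNIV :: bool set) \<times> PiE (UNIV - {i}) (\<lambda>_. {..<N})))"
    unfolding Ic_def by (intro card_SigmaI) (auto intro!: finite_PiE)
  also have "\<dots> = (\<Sum>i\<in>(UNIV::'n set). 2 * N ^ (CARD('n) - 1))"
  proof (intro sum.cong refl)
    fix i :: 'n
    have "card (UNIV - {i}) = CARD('n) - 1" by (simp add: card_Diff_singleton)
    then show "card ((UNIV :: bool set) \<times> PiE (UNIV - {i}) (\<lambda>_. {..<N})) = 2 * N ^ (CARD('n) - 1)"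
      by (simp add: card_cartesian_product card_PiE)
  qed
  also have "\<dots> = CARD('n) * (2 * N ^ (CARD('n) - 1))" by simp
  finally show ?thesis .
qed

lemma grid_index:
  fixes R a :: real and N :: nat
  assumes R: "R > 0" and N: "N \<ge> 1" and a: "\<bar>a\<bar> \<le> R"
  shows "\<exists>k<N. - R + 2 * R * real k / N \<le> a \<and> a \<le> - R + 2 * R * (real k + 1) / N"
proof -
  define q where "q = (a + R) * N / (2 * R)"
  have aR: "0 \<le> a + R" "a + R \<le> 2 * R" using a by auto
  have q0: "0 \<le> q" unfolding q_def using aR R by simp
  have "(a + R) * N \<le> (2 * R) * N" using aR by (intro mult_right_mono) auto
  then have qN: "q \<le> N" unfolding q_def using R by (simp add: pos_divide_le_eq mult.commute)
  have conv: "- R + 2 * R * y / N \<le> a \<longleftrightarrow> y \<le> q" "a \<le> - R + 2 * R * y / N \<longleftrightarrow> q \<le> y" for y :: real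
    using R N unfolding q_def by (auto simp: field_simps)
  define f where "f = nat \<lfloor>q\<rfloor>"
  have f1: "real f \<le> q" "q < real f + 1" using q0 unfolding f_def by linarith+
  show ?thesis
  proof (cases "f < N")
    case True
    show ?thesis
    proof (intro exI[of _ f] conjI)
      show "f < N" by fact
      show "- R + 2 * R * real f / N \<le> a" using conv(1)[of "real f"] f1 by simp
      show "a \<le> - R + 2 * R * (real f + 1) / N" using conv(2)[of "real f + 1"] f1 by simp
    qed
  next
    case False
    then have "q = N" using f1 qN by linarith
    moreover have "real (N - 1) + 1 = real N" using N by simp
    ultimately have qq: "real (N - 1) \<le> q" "q \<le> real (N - 1) + 1" by auto
    show ?thesis
    proof (intro exI[of _ "N - 1"] conjI)
      show "N - 1 < N" using N by simp
      show "- R + 2 * R * real (N - 1) / N \<le> a" using conv(1)[of "real (N - 1)"] qq by simp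
      show "a \<le> - R + 2 * R * (real (N - 1) + 1) / N" using conv(2)[of "real (N - 1) + 1"] qq by simp
    qed
  qed
qed

lemma cube_surface_cover:
  fixes R :: real and N :: nat
  assumes R: "R > 0" and N: "N \<ge> 1"
  shows "{z::real^'n. mx z = R} \<subseteq> (\<Union>c\<in>Ic N. cell R N c)"
proof
  fix z :: "real^'n" assume "z \<in> {z. mx z = R}"
  then have zR: "mx z = R" by simp
  obtain i where i: "\<bar>z$i\<bar> = R" using mx_ex[of z] zR by auto
  have zj: "\<bar>z$j\<bar> \<le> R" for j using mx_ge[of z j] zR by simp
  have "\<forall>j. \<exists>k. j \<noteq> i \<longrightarrow> k < N \<and> - R + 2 * R * real k / N \<le> z$j \<and> z$j \<le> - R + 2 * R * (real k + 1) / N"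
    using grid_index[OF R N zj] by blast
  then obtain k0 where k0: "\<And>j. j \<noteq> i \<Longrightarrow> k0 j < N \<and> - R + 2 * R * real (k0 j) / N \<le> z$j \<and> z$j \<le> - R + 2 * R * (real (k0 j) + 1) / N"
    by metis
  define k where "k j = (if j = i then undefined else k0 j)" for j
  have kP: "k \<in> PiE (UNIV - {i}) (\<lambda>_. {..<N})" using k0 unfolding k_def by (auto simp: PiE_def extensional_def)
  have "z \<in> cell R N (i, z$i \<ge> 0, k)"
    unfolding cell_def using i k0 by (auto simp: k_def)
  moreover have "(i, z$i \<ge> 0, k) \<in> Ic N" unfolding Ic_def using kP by auto
  ultimately show "z \<in> (\<Union>c\<in>Ic N. cell R N c)" by blast
qed

lemma cell_dist:
  fixes R :: real and N :: nat and z w :: "real^'n"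
  assumes R: "R > 0" and N: "N \<ge> 1" and z: "z \<in> cell R N c" and w: "w \<in> cell R N c"
  shows "norm (z - w) \<le> real CARD('n) * (2 * R / N)"
proof -
  obtain i s k where c: "c = (i, s, k)" by (cases c) auto
  have "\<bar>(z - w)$j\<bar> \<le> 2 * R / N" for j
  proof (cases "j = i")
    case True then show ?thesis using z w R N unfolding c cell_def by auto
  next
    case False
    then have "- R + 2 * R * real (k j) / N \<le> z$j" "z$j \<le> - R + 2 * R * (real (k j) + 1) / N"
      "- R + 2 * R * real (k j) / N \<le> w$j" "w$j \<le> - R + 2 * R * (real (k j) + 1) / N"
      using z w unfolding c cell_def by auto
    moreover have "- R + 2 * R * (real (k j) + 1) / N = - R + 2 * R * real (k j) / N + 2 * R / N"
      by (simp add: distrib_left add_divide_distrib)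
    ultimately show ?thesis by simp
  qed
  then have "(\<Sum>j\<in>UNIV. \<bar>(z - w)$j\<bar>) \<le> (\<Sum>j\<in>(UNIV::'n set). 2 * R / N)" by (intro sum_mono)
  then show ?thesis using norm_le_l1_cart[of "z - w"] by simp
qed

lemma hausdorff_normal_points_bound:
  fixes K :: "(real^'n) set"
  assumes K: "convex K" "compact K" "K \<noteq> {}"
  obtains B where "hausdorff_outer (CARD('n) - 1) {x\<in>K. \<exists>v. norm v = 1 \<and> (\<forall>y\<in>K. inner v (y - x) \<le> 0)} \<le> ennreal B"
proof -
  obtain R where R: "R > 0" "K \<subseteq> ball 0 R"
    using compact_imp_bounded[OF K(2)] bounded_subset_ballD by blast
  have Kc: "closed K" using K(2) compact_imp_closed by blast
  let ?s = "CARD('n) - 1"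
  let ?n = "real CARD('n)"
  define B where "B = real (CARD('n) * 2) * (unit_ball_vol (real ?s) * (?n * R) ^ ?s)"
  have "hausdorff_outer ?s {x\<in>K. \<exists>v. norm v = 1 \<and> (\<forall>y\<in>K. inner v (y - x) \<le> 0)} \<le> ennreal B"
  proof (rule hausdorff_outer_le_finite_cover)
    fix \<delta> :: real assume d: "\<delta> > 0"
    define N where "N = nat \<lceil>?n * (2 * R) / \<delta>\<rceil> + 1"
    have N1: "N \<ge> 1" unfolding N_def by simp
    have Npos: "real N > 0" using N1 by simp
    have Nd: "?n * (2 * R / N) \<le> \<delta>"
    proof -
      have "?n * (2 * R) / \<delta> \<le> real N" unfolding N_def by linarith
      then have "?n * (2 * R) \<le> \<delta> * N" using d by (simp add: field_simps)
      then show ?thesis using Npos by (simp add: field_simps)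
    qed
    let ?C = "\<lambda>c. closest_point K ` cell R N c"
    show "\<exists>I (C :: ('n \<times> bool \<times> ('n \<Rightarrow> nat)) \<Rightarrow> (real^'n) set). finite I \<and>
      {x\<in>K. \<exists>v. norm v = 1 \<and> (\<forall>y\<in>K. inner v (y - x) \<le> 0)} \<subseteq> (\<Union>i\<in>I. C i) \<and>
      (\<forall>i\<in>I. bounded (C i) \<and> diameter (C i) \<le> \<delta>) \<and>
      (\<Sum>i\<in>I. unit_ball_vol (real ?s) * (diameter (C i) / 2) ^ ?s) \<le> B"
    proof (intro exI conjI ballI)
      show "finite (Ic N :: ('n \<times> bool \<times> ('n \<Rightarrow> nat)) set)" by (rule finite_Ic)
      show "{x\<in>K. \<exists>v. norm v = 1 \<and> (\<forall>y\<in>K. inner v (y - x) \<le> 0)} \<subseteq> (\<Union>c\<in>Ic N. ?C c)"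
      proof
        fix x assume "x \<in> {x\<in>K. \<exists>v. norm v = 1 \<and> (\<forall>y\<in>K. inner v (y - x) \<le> 0)}"
        then obtain v where x: "x \<in> K" "norm v = 1" "\<forall>y\<in>K. inner v (y - x) \<le> 0" by blast
        have "x \<in> closest_point K ` {z. mx z = R}"
          by (rule normal_point_in_image[OF K(1) Kc R(2) x])
        then show "x \<in> (\<Union>c\<in>Ic N. ?C c)" using cube_surface_cover[OF R(1) N1] by blast
      qed
      fix c :: "'n \<times> bool \<times> ('n \<Rightarrow> nat)" assume c: "c \<in> Ic N"
      show "bounded (?C c)"
        using compact_imp_bounded[OF K(2)] closest_point_in_set[OF Kc K(3)] by (auto intro: bounded_subset)
      have dC: "diameter (?C c) \<le> ?n * (2 * R / N)"
      proof (rule diameter_le)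
        show "?C c \<noteq> {} \<or> 0 \<le> ?n * (2 * R / N)" using R Npos by simp
        fix a b assume "a \<in> ?C c" "b \<in> ?C c"
        then obtain a' b' where "a' \<in> cell R N c" "b' \<in> cell R N c" "a = closest_point K a'" "b = closest_point K b'"
          by blast
        then show "norm (a - b) \<le> ?n * (2 * R / N)"
          using closest_point_lipschitz[OF K(1) Kc K(3), of a' b'] cell_dist[OF R(1) N1, of a' c b']
          by (simp add: dist_norm)
      qed
      then show "diameter (?C c) \<le> \<delta>" using Nd by linarith
    next
      have termle: "unit_ball_vol (real ?s) * (diameter (?C c) / 2) ^ ?s \<le> unit_ball_vol (real ?s) * (?n * R / N) ^ ?s"
        if c: "c \<in> Ic N" for c :: "'n \<times> bool \<times> ('n \<Rightarrow> nat)"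
      proof -
        have b: "bounded (?C c)"
          using compact_imp_bounded[OF K(2)] closest_point_in_set[OF Kc K(3)] by (auto intro: bounded_subset)
        have dC: "diameter (?C c) \<le> ?n * (2 * R / N)"
        proof (rule diameter_le)
          show "?C c \<noteq> {} \<or> 0 \<le> ?n * (2 * R / N)" using R Npos by simp
          fix a b assume "a \<in> ?C c" "b \<in> ?C c"
          then obtain a' b' where "a' \<in> cell R N c" "b' \<in> cell R N c" "a = closest_point K a'" "b = closest_point K b'"
            by blast
          then show "norm (a - b) \<le> ?n * (2 * R / N)"
            using closest_point_lipschitz[OF K(1) Kc K(3), of a' b'] cell_dist[OF R(1) N1, of a' c b']
            by (simp add: dist_norm)
        qed
        have "(diameter (?C c) / 2) ^ ?s \<le> (?n * R / N) ^ ?s"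
          using dC diameter_ge_0[OF b] by (intro power_mono) (auto simp: field_simps)
        then show ?thesis by (intro mult_left_mono) auto
      qed
      have "(\<Sum>c\<in>Ic N. unit_ball_vol (real ?s) * (diameter (?C c) / 2) ^ ?s) \<le>
          (\<Sum>c\<in>(Ic N :: ('n \<times> bool \<times> ('n \<Rightarrow> nat)) set). unit_ball_vol (real ?s) * (?n * R / N) ^ ?s)"
        by (intro sum_mono termle)
      also have "\<dots> = real (CARD('n) * (2 * N ^ ?s)) * (unit_ball_vol (real ?s) * (?n * R / N) ^ ?s)"
        by (simp add: card_Ic)
      also have "\<dots> = B"
      proof -
        have "real (N ^ ?s) * (?n * R / N) ^ ?s = (?n * R) ^ ?s"
          using Npos by (simp add: power_divide)
        then show ?thesis unfolding B_def by (simp add: algebra_simps)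
      qed
      finally show "(\<Sum>c\<in>Ic N. unit_ball_vol (real ?s) * (diameter (?C c) / 2) ^ ?s) \<le> B" .
    qed
  qed
  then show ?thesis by (rule that)
qed


lemma surface_area_measure_sets[simp, measurable_cong]:
  "sets (surface_area_measure (K :: 'a::euclidean_space set)) = sets borel"
  unfolding surface_area_measure_def by (simp add: sets.sigma_sets_eq[of borel, simplified])

lemma surface_area_measure_space[simp]:
  "space (surface_area_measure (K :: 'a::euclidean_space set)) = UNIV"
  unfolding surface_area_measure_def by simp

lemma emeasure_surface_le:
  fixes K :: "'a::euclidean_space set"
  shows "emeasure (surface_area_measure K) B \<le>
    hausdorff_outer (DIM('a) - 1) (rev_spherical_image K (B \<inter> sphere 0 1))"
  unfolding surface_area_measure_def emeasure_measure_of_conv by auto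

lemma rev_spherical_image_subset:
  fixes K :: "'a::euclidean_space set"
  assumes "closed K"
  shows "rev_spherical_image K \<omega> \<subseteq> {x\<in>K. \<exists>v. norm v = 1 \<and> (\<forall>y\<in>K. inner v (y - x) \<le> 0)}"
  unfolding rev_spherical_image_def using frontier_subset_closed[OF assms] by blast

lemma surface_area_measure_bounded:
  fixes K :: "(real^'n) set"
  assumes K: "convex K" "compact K" "K \<noteq> {}"
  obtains B where "\<And>X. emeasure (surface_area_measure K) X \<le> ennreal B"
proof -
  obtain B where B: "hausdorff_outer (CARD('n) - 1) {x\<in>K. \<exists>v. norm v = 1 \<and> (\<forall>y\<in>K. inner v (y - x) \<le> 0)} \<le> ennreal B"
    using hausdorff_normal_points_bound[OF K] by blast
  have "emeasure (surface_area_measure K) X \<le> ennreal B" for X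
  proof -
    have "emeasure (surface_area_measure K) X \<le>
        hausdorff_outer (DIM(real^'n) - 1) (rev_spherical_image K (X \<inter> sphere 0 1))"
      by (rule emeasure_surface_le)
    also have "\<dots> \<le> hausdorff_outer (CARD('n) - 1) {x\<in>K. \<exists>v. norm v = 1 \<and> (\<forall>y\<in>K. inner v (y - x) \<le> 0)}"
      using rev_spherical_image_subset[OF compact_imp_closed[OF K(2)]]
      by (simp add: hausdorff_outer_mono)
    also have "\<dots> \<le> ennreal B" by (rule B)
    finally show ?thesis .
  qed
  then show ?thesis by (rule that)
qed

lemma surface_area_measure_null:
  fixes K :: "'a::euclidean_space set"
  shows "emeasure (surface_area_measure K) (- sphere 0 1) = 0"
proof -
  have "rev_spherical_image K (- sphere 0 1 \<inter> sphere 0 1) = {}"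
    unfolding rev_spherical_image_def by auto
  then have "emeasure (surface_area_measure K) (- sphere 0 1) \<le> 0"
    using emeasure_surface_le[of K "- sphere 0 1"] by (simp add: hausdorff_outer_empty)
  then show ?thesis by simp
qed

lemma AE_surface_area_measure:
  fixes K :: "'a::euclidean_space set"
  shows "AE v in surface_area_measure K. v \<in> sphere 0 1"
proof (rule AE_I')
  show "- sphere 0 1 \<in> null_sets (surface_area_measure K)"
    using surface_area_measure_null[of K] by (auto simp: null_sets_def)
qed auto

context
  fixes K :: "(real^'n) set" and p :: real
  assumes K: "convex_body_io K" and p: "p \<ge> 1"
begin

lemma K_facts: "convex K" "compact K" "K \<noteq> {}" "0 \<in> interior K"
  using K unfolding convex_body_io_def convex_body_def by auto

lemma K_bounded: "\<exists>RK. \<forall>y\<in>K. norm y \<le> RK"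
  using compact_imp_bounded[OF K_facts(2)] unfolding bounded_iff by blast

lemma suppK_cont: "continuous_on UNIV (supp_fun K)"
proof -
  obtain RK where RK0: "\<forall>y\<in>K. norm y \<le> RK" using K_bounded by blast
  then have RK: "\<And>y. y \<in> K \<Longrightarrow> norm y \<le> RK" by auto
  show ?thesis by (rule supp_fun_continuous[OF RK K_facts(3)])
qed

lemma suppK_meas[measurable]: "supp_fun K \<in> borel_measurable borel"
  by (rule borel_measurable_continuous_onI[OF suppK_cont])

lemma suppK_lower: obtains e where "e > 0" "\<And>v. v \<in> sphere 0 1 \<Longrightarrow> e \<le> supp_fun K v"
proof -
  obtain e where e: "e > 0" "cball 0 e \<subseteq> K" using K_facts(4) mem_interior_cball by blast
  obtain RK where RK0: "\<forall>y\<in>K. norm y \<le> RK" using K_bounded by blast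
  then have RK: "\<And>y. y \<in> K \<Longrightarrow> norm y \<le> RK" by auto
  have "e \<le> supp_fun K v" if v: "v \<in> sphere 0 1" for v
  proof -
    have ev: "e *\<^sub>R v \<in> K" using e v by (auto intro!: subsetD[OF e(2)])
    have "inner (e *\<^sub>R v) v \<le> supp_fun K v" by (rule supp_fun_upper[OF RK ev])
    moreover have "inner (e *\<^sub>R v) v = e" using v by (simp add: inner_commute dot_square_norm)
    ultimately show ?thesis using e(1) by auto
  qed
  then show ?thesis using e(1) that by blast
qed

abbreviation "\<nu> \<equiv> lp_surface_area_measure p K"

lemma nu_sets[simp, measurable_cong]: "sets \<nu> = sets borel"
  unfolding lp_surface_area_measure_def by simp

lemma nu_space[simp]: "space \<nu> = UNIV"
  unfolding lp_surface_area_measure_def by simp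

lemma AE_nu: "AE v in \<nu>. v \<in> sphere 0 1"
  unfolding lp_surface_area_measure_def
  by (subst AE_density) (auto intro: AE_mp[OF AE_surface_area_measure])

lemma finite_nu: "finite_measure \<nu>"
proof (rule finite_measureI)
  obtain e where e: "e > 0" "\<And>v. v \<in> sphere 0 1 \<Longrightarrow> e \<le> supp_fun K v" by (rule suppK_lower) blast
  obtain B where B: "\<And>X. emeasure (surface_area_measure K) X \<le> ennreal B"
    using surface_area_measure_bounded[OF K_facts(1-3)] by blast
  have "emeasure \<nu> (space \<nu>) = (\<integral>\<^sup>+v. ennreal (supp_fun K v powr (1 - p)) \<partial>surface_area_measure K)"
    unfolding lp_surface_area_measure_def by (subst emeasure_density) auto
  also have "\<dots> \<le> (\<integral>\<^sup>+v. ennreal (e powr (1 - p)) \<partial>surface_area_measure K)"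
  proof (rule nn_integral_mono_AE)
    show "AE v in surface_area_measure K. ennreal (supp_fun K v powr (1 - p)) \<le> ennreal (e powr (1 - p))"
      using AE_surface_area_measure
    proof eventually_elim
      case (elim v)
      then have "e \<le> supp_fun K v" by (rule e(2))
      then have "supp_fun K v powr (1 - p) \<le> e powr (1 - p)" using e(1) p by (intro powr_mono2') auto
      then show ?case by (rule ennreal_leI)
    qed
  qed
  also have "\<dots> = ennreal (e powr (1 - p)) * emeasure (surface_area_measure K) UNIV"
    by (simp add: nn_integral_const)
  also have "\<dots> \<le> ennreal (e powr (1 - p)) * ennreal B" by (intro mult_left_mono B) auto
  also have "\<dots> < \<infinity>" by (simp add: ennreal_mult_less_top)
  finally show "emeasure \<nu> (space \<nu>) \<noteq> \<infinity>" by simp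
qed

lemma integrable_nu_bounded:
  fixes f :: "real^'n \<Rightarrow> real"
  assumes f: "continuous_on UNIV f"
  shows "integrable \<nu> f"
proof -
  have "compact (f ` sphere 0 1)"
    by (rule compact_continuous_image[OF continuous_on_subset[OF f]]) auto
  then have "bounded (f ` sphere 0 1)" by (rule compact_imp_bounded)
  then obtain B where B: "\<forall>y\<in>f ` sphere 0 1. norm y \<le> B"
    unfolding bounded_iff by blast
  have fm: "f \<in> borel_measurable \<nu>"
    using borel_measurable_continuous_onI[OF f] unfolding measurable_cong_sets[OF nu_sets refl] .
  have ae: "AE x in \<nu>. norm (f x) \<le> B" using AE_nu by eventually_elim (use B in blast)
  show ?thesis by (rule finite_measure.integrable_const_bound[OF finite_nu ae fm])
qed

end


lemma vm_scaleR_right: "(v::real^'n) v* (c *\<^sub>R (x::real^'m^'n)) = c *\<^sub>R (v v* x)"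
  by (simp add: vec_eq_iff vector_matrix_mult_def sum_distrib_left algebra_simps)

lemma vm_scaleR_left: "(c *\<^sub>R (v::real^'n)) v* (x::real^'m^'n) = c *\<^sub>R (v v* x)"
  by (simp add: vec_eq_iff vector_matrix_mult_def sum_distrib_left algebra_simps)

lemma vm_continuous_on[continuous_intros]:
  fixes f :: "'a::topological_space \<Rightarrow> real^'n" and g :: "'a \<Rightarrow> real^'m^'n"
  assumes "continuous_on S f" "continuous_on S g"
  shows "continuous_on S (\<lambda>z. f z v* g z)"
  unfolding vector_matrix_mult_def by (intro continuous_intros assms)

lemma powr_roundtrip: "(a::real) \<ge> 0 \<Longrightarrow> p > 0 \<Longrightarrow> (a powr (1/p)) powr p = a"
  by (cases "a = 0") (auto simp: powr_powr)

lemma borel_measurable_pair_cong: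
  fixes f :: "'a::second_countable_topology \<times> 'b::second_countable_topology \<Rightarrow> 'c::topological_space"
  assumes f: "f \<in> borel_measurable borel" and M: "sets M = sets borel" and N: "sets N = sets borel"
  shows "f \<in> borel_measurable (M \<Otimes>\<^sub>M N)"
proof -
  have "sets (M \<Otimes>\<^sub>M N) = sets (borel \<Otimes>\<^sub>M borel)" by (rule sets_pair_measure_cong[OF M N])
  also have "\<dots> = sets (borel :: ('a \<times> 'b) measure)" by (simp only: borel_prod)
  finally have S: "sets (M \<Otimes>\<^sub>M N) = sets (borel :: ('a \<times> 'b) measure)" .
  show ?thesis using f unfolding measurable_cong_sets[OF S refl] .
qed


theorem lemma3p4:
  fixes p :: real
    and K :: "(real^'n) set"
    and Q :: "(real^'m) set"
    and L :: "(real^'m^'n) set"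
  assumes "p \<ge> 1"
    and "convex_body_io K"
    and "convex_body_o Q"
    and "star_body L"
  shows "dual_mixed_volume p L (polar (Pi_body Q p K)) =
         ((real (CARD('n) * CARD('m)) + p) * measure lborel L / real CARD('m)) *
           lp_mixed_volume p K (Gamma_body Q p L)"
proof -
  note p1 = assms(1) and Kb = assms(2) and Lb = assms(4)
  have pp: "p > 0" using p1 by simp
  have Qc: "compact Q" "Q \<noteq> {}" "0 \<in> Q" using assms(3) unfolding convex_body_o_def convex_body_def by auto
  obtain RQ where RQ0: "\<forall>y\<in>Q. norm y \<le> RQ" using compact_imp_bounded[OF Qc(1)] unfolding bounded_iff by blast
  have RQ: "\<And>y. y \<in> Q \<Longrightarrow> norm y \<le> RQ" using RQ0 by auto
  define h where "h = supp_fun Q"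
  have h0: "\<And>w. 0 \<le> h w" unfolding h_def by (rule supp_fun_nonneg[OF RQ Qc(3)])
  have hadd: "\<And>a b. h (a + b) \<le> h a + h b" unfolding h_def by (rule supp_fun_add[OF RQ Qc(2)])
  have hhom: "\<And>c a. c \<ge> 0 \<Longrightarrow> h (c *\<^sub>R a) = c * h a" unfolding h_def by (rule supp_fun_scale[OF RQ Qc(2)])
  have hcont: "continuous_on UNIV h" unfolding h_def by (rule supp_fun_continuous[OF RQ Qc(2)])
  have Lc: "compact L" and L0: "0 \<in> interior L" using Lb unfolding star_body_def by auto
  have Lm[measurable]: "L \<in> sets borel" using Lc by (simp add: borel_compact)

  let ?\<nu> = "lp_surface_area_measure p K"
  have \<nu>fin: "finite_measure ?\<nu>" by (rule finite_nu[OF Kb p1])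
  have \<nu>sf: "sigma_finite_measure ?\<nu>" by (rule finite_measure.axioms(1)[OF \<nu>fin])
  have \<sigma>sf: "sigma_finite_measure (sphere_measure :: (real^'m^'n) measure)"
    by (rule finite_measure.axioms(1)[OF finite_sphere_measure])
  have \<nu>sets: "sets ?\<nu> = sets borel" by (rule nu_sets[OF Kb p1])

  define \<Phi> where "\<Phi> = (\<lambda>z::(real^'m^'n) \<times> (real^'n). h (snd z v* fst z) powr p)"
  have \<Phi>c: "continuous_on UNIV \<Phi>"
    unfolding \<Phi>_def
    by (rule continuous_on_powr') (auto intro!: continuous_on_compose2[OF hcont] continuous_intros simp: h0 pp)
  have \<Phi>m: "\<Phi> \<in> borel_measurable borel" by (rule borel_measurable_continuous_onI[OF \<Phi>c])
  have \<Phi>0: "\<And>z. 0 \<le> \<Phi> z" unfolding \<Phi>_def by simp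
  have \<Phi>v: "continuous_on UNIV (\<lambda>v. \<Phi> (\<theta>, v))" for \<theta>
    by (rule continuous_on_compose2[OF \<Phi>c]) (auto intro!: continuous_intros)
  have \<Phi>x: "continuous_on UNIV (\<lambda>x. \<Phi> (x, v))" for v
    by (rule continuous_on_compose2[OF \<Phi>c]) (auto intro!: continuous_intros)
  have \<Phi>i: "integrable ?\<nu> (\<lambda>v. \<Phi> (\<theta>, v))" for \<theta>
    by (rule integrable_nu_bounded[OF Kb p1 \<Phi>v])

  define HP where "HP \<theta> = (\<integral>v. h (v v* \<theta>) powr p \<partial>?\<nu>) powr (1/p)" for \<theta>
  have Fi: "integrable ?\<nu> (\<lambda>v. h (v v* \<theta>) powr p)" for \<theta>
    using \<Phi>i[of \<theta>] unfolding \<Phi>_def by simp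
  have HPadd: "HP (x + y) \<le> HP x + HP y" for x y
    unfolding HP_def
    by (rule lp_sublinear(1)[where F="\<lambda>\<theta> v. h (v v* \<theta>)", OF p1 h0 _ _ Fi])
       (auto simp: vector_matrix_mult_add_rdistrib vm_scaleR_right hadd hhom)
  have HPhom: "HP (c *\<^sub>R x) = c * HP x" if "c \<ge> 0" for c x
    unfolding HP_def
    by (rule lp_sublinear(2)[where F="\<lambda>\<theta> v. h (v v* \<theta>)", OF p1 h0 _ _ Fi that])
       (auto simp: vector_matrix_mult_add_rdistrib vm_scaleR_right hadd hhom)
  have HP0: "HP x \<ge> 0" for x unfolding HP_def by simp
  have PiB: "Pi_body Q p K = {y. \<forall>x. inner y x \<le> HP x}"
    unfolding Pi_body_def HP_def h_def ..
  have inv: "real_of_ereal (inverse (radial_fun (polar (Pi_body Q p K)) \<theta>)) = HP \<theta>" for \<theta>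
    unfolding PiB by (rule polar_wulff_inverse[OF HPadd HPhom HP0])
  have HPp: "HP \<theta> powr p = (\<integral>v. \<Phi> (\<theta>, v) \<partial>?\<nu>)" for \<theta>
  proof -
    have "(\<integral>v. \<Phi> (\<theta>, v) \<partial>?\<nu>) \<ge> 0" by (rule integral_nonneg_AE) (simp add: \<Phi>0)
    then show ?thesis unfolding HP_def \<Phi>_def using pp by (simp add: powr_roundtrip)
  qed

  define V where "V = measure lborel L"
  have Vpos: "V > 0"
  proof -
    obtain e where e: "e > 0" "ball 0 e \<subseteq> L" using L0 mem_interior by blast
    have "measure lborel (ball (0::real^'m^'n) e) \<le> measure lborel L"
      by (rule measure_mono_fmeasurable[OF e(2)]) (auto intro: fmeasurable_compact[OF Lc])
    then show ?thesis unfolding V_def using content_ball_pos[OF e(1), of "0::real^'m^'n"] by linarith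
  qed
  define g where "g (v::real^'n) (x::real^'m^'n) = h (v v* x) powr p" for v x
  have g0: "g v x \<ge> 0" for v x unfolding g_def by simp
  have gx: "continuous_on UNIV (g v)" for v
    using \<Phi>x[of v] unfolding \<Phi>_def g_def by simp
  have gm[measurable]: "g v \<in> borel_measurable borel" for v by (rule borel_measurable_continuous_onI[OF gx])
  have gLi: "integrable lborel (\<lambda>x. indicator L x *\<^sub>R g v x)" for v
  proof -
    have "compact (g v ` L)" by (rule compact_continuous_image[OF continuous_on_subset[OF gx]]) (use Lc in auto)
    then have "bounded (g v ` L)" by (rule compact_imp_bounded)
    then obtain B where B: "\<forall>y\<in>g v ` L. norm y \<le> B" unfolding bounded_iff by blast
    show ?thesis
      by (rule integrableI_bounded_set_indicator[where B=B]) (use B emeasure_compact_finite[OF Lc] in auto)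
  qed
  define Iv where "Iv v = (LINT x:L|lborel. h (v v* x) powr p)" for v
  have Iv_eq: "Iv v = (\<integral>x. indicator L x *\<^sub>R g v x \<partial>lborel)" for v
    unfolding Iv_def g_def set_lebesgue_integral_def ..
  have Iv0: "Iv v \<ge> 0" for v unfolding Iv_eq by (rule integral_nonneg_AE) (simp add: g0)
  define HG where "HG v = ((1 / V) * Iv v) powr (1/p)" for v
  define NG where "NG v = (\<integral>x. (indicator L x * h (v v* x)) powr p \<partial>lborel) powr (1/p)" for v
  have ind_powr: "(indicator L x * a) powr p = indicator L x *\<^sub>R (a powr p)" for x and a :: real
    using pp by (simp add: indicator_def)
  have NGi: "integrable lborel (\<lambda>x. (indicator L x * h (v v* x)) powr p)" for v
    unfolding ind_powr using gLi[of v] unfolding g_def .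
  have NGadd: "NG (v + w) \<le> NG v + NG w" for v w
    unfolding NG_def
    by (rule lp_sublinear(1)[where F="\<lambda>v x. indicator L x * h (v v* x)", OF p1 _ _ _ NGi])
       (auto simp: vector_matrix_left_distrib vm_scaleR_left hadd hhom h0 indicator_def)
  have NGhom: "NG (c *\<^sub>R v) = c * NG v" if "c \<ge> 0" for c v
    unfolding NG_def
    by (rule lp_sublinear(2)[where F="\<lambda>v x. indicator L x * h (v v* x)", OF p1 _ _ _ NGi that])
       (auto simp: vector_matrix_left_distrib vm_scaleR_left hadd hhom h0 indicator_def)
  have HG_NG: "HG v = (1 / V) powr (1/p) * NG v" for v
  proof -
    have e: "Iv v = (\<integral>x. (indicator L x * h (v v* x)) powr p \<partial>lborel)"
      unfolding Iv_eq ind_powr g_def ..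
    have "HG v = (1 / V) powr (1/p) * Iv v powr (1/p)"
      unfolding HG_def using Vpos Iv0[of v] by (intro powr_mult; simp)
    then show ?thesis unfolding NG_def e[symmetric] .
  qed
  have HGadd: "HG (v + w) \<le> HG v + HG w" for v w
    unfolding HG_NG using NGadd[of v w] by (simp add: distrib_left[symmetric] mult_left_mono)
  have HGhom: "HG (c *\<^sub>R v) = c * HG v" if "c \<ge> 0" for c v
    unfolding HG_NG using NGhom[OF that] by simp
  have GamB: "Gamma_body Q p L = {y. \<forall>v. inner y v \<le> HG v}"
    unfolding Gamma_body_def HG_def Iv_def h_def V_def ..
  have suppG: "supp_fun (Gamma_body Q p L) v = HG v" for v
    unfolding GamB by (rule wulff_supp[OF HGadd HGhom])
  have HGp: "HG v powr p = (1 / V) * Iv v" for v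
    unfolding HG_def using pp Vpos Iv0[of v] by (intro powr_roundtrip) auto

  have RHS: "lp_mixed_volume p K (Gamma_body Q p L) = (1 / real CARD('n)) * ((1 / V) * (\<integral>v. Iv v \<partial>?\<nu>))"
    unfolding lp_mixed_volume_def suppG HGp by simp

  let ?D = "real DIM(real^'m^'n)"
  define \<rho> where "\<rho> \<theta> = real_of_ereal (radial_fun L \<theta>)" for \<theta>
  have \<rho>m[measurable]: "\<rho> \<in> borel_measurable borel" unfolding \<rho>_def by (rule radial_real_measurable[OF Lb])
  define G where "G \<theta> = (\<integral>v. \<Phi> (\<theta>, v) \<partial>?\<nu>)" for \<theta>
  have Gm: "G \<in> borel_measurable borel"
    unfolding G_def
  proof (rule sigma_finite_measure.borel_measurable_lebesgue_integral[OF \<nu>sf])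
    have "\<Phi> \<in> borel_measurable (borel \<Otimes>\<^sub>M ?\<nu>)"
      by (rule borel_measurable_pair_cong[OF \<Phi>m]) (simp_all add: \<nu>sets)
    then show "(\<lambda>(\<theta>, v). \<Phi> (\<theta>, v)) \<in> borel_measurable (borel \<Otimes>\<^sub>M ?\<nu>)" by simp
  qed
  have G0: "G \<theta> \<ge> 0" for \<theta> unfolding G_def by (rule integral_nonneg_AE) (simp add: \<Phi>0)
  have LHS1: "dual_mixed_volume p L (polar (Pi_body Q p K)) =
      (1 / ?D) * (\<integral>\<theta>. \<rho> \<theta> powr (?D + p) * G \<theta> \<partial>sphere_measure)"
    unfolding dual_mixed_volume_def inv HPp \<rho>_def G_def ..
  have \<phi>m: "(\<lambda>\<theta>. \<rho> \<theta> powr (?D + p) * G \<theta>) \<in> borel_measurable sphere_measure"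
    using Gm unfolding measurable_cong_sets[OF sphere_measure_sets refl] by measurable
  have LHS2: "(\<integral>\<theta>. \<rho> \<theta> powr (?D + p) * G \<theta> \<partial>sphere_measure) =
      enn2real (\<integral>\<^sup>+\<theta>. ennreal (\<rho> \<theta> powr (?D + p) * G \<theta>) \<partial>sphere_measure)"
    by (rule integral_eq_nn_integral[OF \<phi>m]) (simp add: G0)
  define \<Psi> where "\<Psi> = (\<lambda>z::(real^'m^'n) \<times> (real^'n). ennreal (\<rho> (fst z) powr (?D + p) * \<Phi> z))"
  have \<Psi>m: "\<Psi> \<in> borel_measurable (sphere_measure \<Otimes>\<^sub>M ?\<nu>)"
  proof (rule borel_measurable_pair_cong)
    have fstm: "(fst :: (real^'m^'n) \<times> (real^'n) \<Rightarrow> _) \<in> borel_measurable borel"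
      by (rule borel_measurable_continuous_onI) (intro continuous_intros)
    have \<rho>f: "(\<lambda>z::(real^'m^'n) \<times> (real^'n). \<rho> (fst z)) \<in> borel_measurable borel"
      using measurable_compose[OF fstm \<rho>m] by (simp add: o_def)
    show "\<Psi> \<in> borel_measurable borel" unfolding \<Psi>_def
      by (intro measurable_compose[OF _ measurable_ennreal] borel_measurable_times powr_real_measurable \<rho>f \<Phi>m borel_measurable_const)
  qed (simp_all add: \<nu>sets)
  have step1: "(\<integral>\<^sup>+\<theta>. ennreal (\<rho> \<theta> powr (?D + p) * G \<theta>) \<partial>sphere_measure) =
      (\<integral>\<^sup>+\<theta>. (\<integral>\<^sup>+v. \<Psi> (\<theta>, v) \<partial>?\<nu>) \<partial>sphere_measure)"
  proof (intro nn_integral_cong)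
    fix \<theta> :: "real^'m^'n"
    have "ennreal (G \<theta>) = (\<integral>\<^sup>+v. ennreal (\<Phi> (\<theta>, v)) \<partial>?\<nu>)"
      unfolding G_def by (rule nn_integral_eq_integral[symmetric, OF \<Phi>i]) (simp add: \<Phi>0)
    moreover have "(\<lambda>v. ennreal (\<Phi> (\<theta>, v))) \<in> borel_measurable ?\<nu>"
      using borel_measurable_continuous_onI[OF \<Phi>v[of \<theta>]] unfolding measurable_cong_sets[OF \<nu>sets refl] by measurable
    ultimately show "ennreal (\<rho> \<theta> powr (?D + p) * G \<theta>) = (\<integral>\<^sup>+v. \<Psi> (\<theta>, v) \<partial>?\<nu>)"
      unfolding \<Psi>_def by (simp add: ennreal_mult'' G0 \<Phi>0 nn_integral_cmult)
  qed
  have step2: "(\<integral>\<^sup>+\<theta>. (\<integral>\<^sup>+v. \<Psi> (\<theta>, v) \<partial>?\<nu>) \<partial>sphere_measure) =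
      (\<integral>\<^sup>+v. (\<integral>\<^sup>+\<theta>. \<Psi> (\<theta>, v) \<partial>sphere_measure) \<partial>?\<nu>)"
  proof -
    interpret pair_sigma_finite "sphere_measure :: (real^'m^'n) measure" ?\<nu>
      by (intro pair_sigma_finite.intro \<sigma>sf \<nu>sf)
    show ?thesis by (rule Fubini[OF \<Psi>m, symmetric])
  qed
  have step3: "(\<integral>\<^sup>+\<theta>. \<Psi> (\<theta>, v) \<partial>sphere_measure) = ennreal (?D + p) * ennreal (Iv v)" for v
  proof -
    have ghom: "g v (r *\<^sub>R x) = r powr p * g v x" if "r > 0" for r x
      unfolding g_def using that h0 by (simp add: vm_scaleR_right hhom powr_mult)
    have sp: "(\<integral>\<^sup>+x. indicator L x * ennreal (g v x) \<partial>lborel) =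
        (\<integral>\<^sup>+\<theta>. ennreal (\<rho> \<theta> powr (?D + p) / (?D + p) * g v \<theta>) \<partial>sphere_measure)"
      unfolding \<rho>_def by (rule star_polar[OF Lb gm g0 ghom]) (use pp in auto)
    have "(\<integral>\<^sup>+\<theta>. \<Psi> (\<theta>, v) \<partial>sphere_measure) =
        (\<integral>\<^sup>+\<theta>. ennreal (?D + p) * ennreal (\<rho> \<theta> powr (?D + p) / (?D + p) * g v \<theta>) \<partial>sphere_measure)"
    proof (intro nn_integral_cong)
      fix \<theta> :: "real^'m^'n"
      have "?D + p > 0" using pp by (intro add_nonneg_pos) simp_all
      then show "\<Psi> (\<theta>, v) = ennreal (?D + p) * ennreal (\<rho> \<theta> powr (?D + p) / (?D + p) * g v \<theta>)"
        unfolding \<Psi>_def \<Phi>_def g_def using pp h0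
        by (subst ennreal_mult''[symmetric]) (auto simp: field_simps)
    qed
    also have "\<dots> = ennreal (?D + p) * (\<integral>\<^sup>+\<theta>. ennreal (\<rho> \<theta> powr (?D + p) / (?D + p) * g v \<theta>) \<partial>sphere_measure)"
      by (rule nn_integral_cmult) (use gm in measurable)
    also have "\<dots> = ennreal (?D + p) * (\<integral>\<^sup>+x. indicator L x * ennreal (g v x) \<partial>lborel)"
      unfolding sp ..
    also have "(\<integral>\<^sup>+x. indicator L x * ennreal (g v x) \<partial>lborel) = (\<integral>\<^sup>+x. ennreal (indicator L x *\<^sub>R g v x) \<partial>lborel)"
      by (intro nn_integral_cong) (simp add: indicator_def)
    also have "\<dots> = ennreal (Iv v)"
      unfolding Iv_eq by (rule nn_integral_eq_integral[OF gLi]) (simp add: g0)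
    finally show ?thesis .
  qed
  have Ivm: "Iv \<in> borel_measurable ?\<nu>"
  proof -
    have "(\<lambda>v. \<integral>x. indicator L x *\<^sub>R g v x \<partial>lborel) \<in> borel_measurable ?\<nu>"
    proof (rule sigma_finite_measure.borel_measurable_lebesgue_integral[OF sigma_finite_lborel])
      have swm: "(\<lambda>z::(real^'n) \<times> (real^'m^'n). (snd z, fst z)) \<in> borel_measurable borel"
        by (rule borel_measurable_continuous_onI) (intro continuous_intros)
      have sndm: "(snd :: (real^'n) \<times> (real^'m^'n) \<Rightarrow> _) \<in> borel_measurable borel"
        by (rule borel_measurable_continuous_onI) (intro continuous_intros)
      have im: "(\<lambda>z::(real^'n) \<times> (real^'m^'n). indicator L (snd z) :: real) \<in> borel_measurable borel"
        using measurable_compose[OF sndm borel_measurable_indicator[OF Lm]] by (simp add: o_def)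
      have pm: "(\<lambda>z::(real^'n) \<times> (real^'m^'n). \<Phi> (snd z, fst z)) \<in> borel_measurable borel"
        using measurable_compose[OF swm \<Phi>m] by (simp add: o_def)
      have "(\<lambda>z::(real^'n) \<times> (real^'m^'n). indicator L (snd z) *\<^sub>R \<Phi> (snd z, fst z)) \<in> borel_measurable borel"
        by (intro borel_measurable_scaleR im pm)
      then have "(\<lambda>z::(real^'n) \<times> (real^'m^'n). indicator L (snd z) *\<^sub>R \<Phi> (snd z, fst z)) \<in> borel_measurable (?\<nu> \<Otimes>\<^sub>M lborel)"
        by (rule borel_measurable_pair_cong) (simp_all add: \<nu>sets)
      then show "(\<lambda>(v, x). indicator L x *\<^sub>R g v x) \<in> borel_measurable (?\<nu> \<Otimes>\<^sub>M lborel)"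
        unfolding \<Phi>_def g_def by (simp add: case_prod_beta')
    qed
    then show ?thesis unfolding Iv_eq .
  qed
  have step4: "(\<integral>v. Iv v \<partial>?\<nu>) = enn2real (\<integral>\<^sup>+v. ennreal (Iv v) \<partial>?\<nu>)"
    by (rule integral_eq_nn_integral[OF Ivm]) (simp add: Iv0)
  have LHS: "dual_mixed_volume p L (polar (Pi_body Q p K)) = (1 / ?D) * ((?D + p) * (\<integral>v. Iv v \<partial>?\<nu>))"
  proof -
    have "(\<integral>\<^sup>+\<theta>. ennreal (\<rho> \<theta> powr (?D + p) * G \<theta>) \<partial>sphere_measure) =
        (\<integral>\<^sup>+v. ennreal (?D + p) * ennreal (Iv v) \<partial>?\<nu>)"
      unfolding step1 step2 step3 ..
    also have "\<dots> = ennreal (?D + p) * (\<integral>\<^sup>+v. ennreal (Iv v) \<partial>?\<nu>)"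
      by (rule nn_integral_cmult) (use Ivm in measurable)
    finally have e: "(\<integral>\<^sup>+\<theta>. ennreal (\<rho> \<theta> powr (?D + p) * G \<theta>) \<partial>sphere_measure) =
        ennreal (?D + p) * (\<integral>\<^sup>+v. ennreal (Iv v) \<partial>?\<nu>)" .
    have Dp: "enn2real (ennreal (?D + p)) = ?D + p" using pp by (intro enn2real_ennreal add_nonneg_nonneg) simp_all
    show ?thesis unfolding LHS1 LHS2 e step4 enn2real_mult Dp ..
  qed
  have D: "?D = real CARD('n) * real CARD('m)" by simp
  show ?thesis
    unfolding LHS RHS V_def[symmetric] D using Vpos by (simp add: field_simps)
qed

end
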